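(* Let $\mathcal{X}$, $\mathcal{Y}$ be finite sets, $\mathcal{H}_S$ a finite-dimensional Hilbert space, and $\{\mathcal{N}^{y|x}\}_{x\in\mathcal{X},y\in\mathcal{Y}}$ an indecomposable CC-QSC acting on $\mathcal{H}_S$. Let $Q$ be a probability mass function on $\mathcal{X}$. For an initial density operator $\rho_{S_0}\in\mathfrak{D}(\mathcal{H}_S)$ and $n\ge1$, let $(X_1^n,Y_1^n)$ be random sequences on $\mathcal{X}^n\times\mathcal{Y}^n$ with joint pmf \[ P(\mathbf{x}_1^n,\mathbf{y}_1^n)=\prod_{\ell=1}^n Q(x_\ell)\cdot\operatorname{tr}\big(\mathcal{N}^{y_n|x_n}\circ\cdots\circ\mathcal{N}^{y_1|x_1}(\rho_{S_0})\big), \] and define $\mathrm{I}^{(n)}(Q,\{\mathcal{N}^{y|x}\},\rho_{S_0})\triangleq\frac1n \mathbf{I}(X_1^n;Y_1^n)$, the (classical) mutual information under this joint pmf, divided by $n$. Then for any $\alpha_{S_0},\beta_{S_0}\in\mathfrak{D}(\mathcal{H}_S)$, \[ \mathrm{I}^{(n)}(Q,\{\mathcal{N}^{y|x}\},\alpha_{S_0})-\mathrm{I}^{(n)}(Q,\{\mathcal{N}^{y|x}\},\beta_{S_0})\xrightarrow{n\to\infty}0 . \]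
   Context: $\mathfrak{D}(\mathcal{H})$ denotes the set of density operators on $\mathcal{H}$. A (classical-input classical-output) quantum-state channel (CC-QSC) is a finitely indexed family $\{\mathcal{N}^{y|x}\}_{x\in\mathcal{X},y\in\mathcal{Y}}$ of completely positive maps, all acting on operators on the same Hilbert space $\mathcal{H}_S$, such that $\sum_{y\in\mathcal{Y}}\mathcal{N}^{y|x}$ is trace-preserving for each $x\in\mathcal{X}$. A CC-QSC is called indecomposable if for any initial density operators $\alpha_{S_0},\beta_{S_0}$ and any $\varepsilon>0$ there exists a positive integer $N$ such that $\|\alpha_{S_n}^{(\mathbf{x}_1^n)}-\beta_{S_n}^{(\mathbf{x}_1^n)}\|_1<\varepsilon$ for all $n\ge N$ and all $\mathbf{x}_1^n\in\mathcal{X}^n$, where $\alpha_{S_n}^{(\mathbf{x}_1^n)}\triangleq\sum_{\mathbf{y}_1^n\in\mathcal{Y}^n}\mathcal{N}^{y_n|x_n}\circ\cdots\circ\mathcal{N}^{y_1|x_1}(\alpha_{S_0})$, similarly for $\beta$, and $\|A\|_1\triangleq\frac12\operatorname{tr}\sqrt{A^\dagger A}$ is the trace distance. *)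

theory Defs
  imports Complex_Main "Jordan_Normal_Form.Schur_Decomposition"
begin

(* Operators on H_S = C^d are represented as d x d complex matrices. *)

definition mtrace :: "complex mat \<Rightarrow> complex" where
  "mtrace A = (\<Sum>i<dim_row A. A $$ (i, i))"

definition psd :: "complex mat \<Rightarrow> bool" where
  "psd A \<longleftrightarrow> A \<in> carrier_mat (dim_row A) (dim_row A) \<and> mat_adjoint A = A \<and>
     (\<forall>v \<in> carrier_vec (dim_row A). 0 \<le> Re (scalar_prod (conjugate v) (A *\<^sub>v v)))"

definition density :: "nat \<Rightarrow> complex mat \<Rightarrow> bool" where
  "density d A \<longleftrightarrow> A \<in> carrier_mat d d \<and> psd A \<and> mtrace A = 1"

definition trace_dist_norm :: "complex mat \<Rightarrow> real" where
  "trace_dist_norm A = (1/2) * Re (mtrace (THE B. B \<in> carrier_mat (dim_col A) (dim_col A) \<and> psd B \<and>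
      B * B = mat_adjoint A * A))"

(* (id_k \<otimes> Phi) applied to a (k*d) x (k*d) block matrix *)
definition block_apply :: "nat \<Rightarrow> nat \<Rightarrow> (complex mat \<Rightarrow> complex mat) \<Rightarrow> complex mat \<Rightarrow> complex mat" where
  "block_apply k d \<Phi> A = mat (k * d) (k * d) (\<lambda>(i, j).
      \<Phi> (mat d d (\<lambda>(a, b). A $$ ((i div d) * d + a, (j div d) * d + b))) $$ (i mod d, j mod d))"

definition completely_positive :: "nat \<Rightarrow> (complex mat \<Rightarrow> complex mat) \<Rightarrow> bool" where
  "completely_positive d \<Phi> \<longleftrightarrow>
     (\<forall>A \<in> carrier_mat d d. \<Phi> A \<in> carrier_mat d d) \<and>
     (\<forall>A \<in> carrier_mat d d. \<forall>B \<in> carrier_mat d d. \<Phi> (A + B) = \<Phi> A + \<Phi> B) \<and>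
     (\<forall>A \<in> carrier_mat d d. \<forall>c. \<Phi> (c \<cdot>\<^sub>m A) = c \<cdot>\<^sub>m \<Phi> A) \<and>
     (\<forall>k. \<forall>A \<in> carrier_mat (k * d) (k * d). psd A \<longrightarrow> psd (block_apply k d \<Phi> A))"

definition msum :: "nat \<Rightarrow> ('i \<Rightarrow> complex mat) \<Rightarrow> 'i set \<Rightarrow> complex mat" where
  "msum d f S = mat d d (\<lambda>ij. \<Sum>s\<in>S. f s $$ ij)"

definition cc_qsc :: "nat \<Rightarrow> ('x::finite \<Rightarrow> 'y::finite \<Rightarrow> complex mat \<Rightarrow> complex mat) \<Rightarrow> bool" where
  "cc_qsc d N \<longleftrightarrow> (\<forall>x y. completely_positive d (N x y)) \<and>
     (\<forall>x. \<forall>A \<in> carrier_mat d d. mtrace (msum d (\<lambda>y. N x y A) UNIV) = mtrace A)"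

definition apply_seq :: "('x \<Rightarrow> 'y \<Rightarrow> complex mat \<Rightarrow> complex mat) \<Rightarrow> 'x list \<Rightarrow> 'y list \<Rightarrow> complex mat \<Rightarrow> complex mat" where
  "apply_seq N xs ys \<rho> = fold (\<lambda>(x, y) r. N x y r) (zip xs ys) \<rho>"

definition out_state :: "nat \<Rightarrow> ('x \<Rightarrow> 'y::finite \<Rightarrow> complex mat \<Rightarrow> complex mat) \<Rightarrow> 'x list \<Rightarrow> complex mat \<Rightarrow> complex mat" where
  "out_state d N xs \<rho> = msum d (\<lambda>ys. apply_seq N xs ys \<rho>) {ys. length ys = length xs}"

definition indecomposable :: "nat \<Rightarrow> ('x::finite \<Rightarrow> 'y::finite \<Rightarrow> complex mat \<Rightarrow> complex mat) \<Rightarrow> bool" where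
  "indecomposable d N \<longleftrightarrow>
     (\<forall>\<alpha> \<beta>. density d \<alpha> \<longrightarrow> density d \<beta> \<longrightarrow>
       (\<forall>\<epsilon>>0. \<exists>N0>0. \<forall>n\<ge>N0. \<forall>xs. length xs = n \<longrightarrow>
          trace_dist_norm (out_state d N xs \<alpha> - out_state d N xs \<beta>) < \<epsilon>))"

definition joint_pmf :: "('x \<Rightarrow> real) \<Rightarrow> ('x \<Rightarrow> 'y \<Rightarrow> complex mat \<Rightarrow> complex mat) \<Rightarrow> complex mat \<Rightarrow> 'x list \<Rightarrow> 'y list \<Rightarrow> real" where
  "joint_pmf Q N \<rho> xs ys = (\<Prod>x\<leftarrow>xs. Q x) * Re (mtrace (apply_seq N xs ys \<rho>))"

definition mutual_info_n :: "('x::finite \<Rightarrow> real) \<Rightarrow> ('x \<Rightarrow> 'y::finite \<Rightarrow> complex mat \<Rightarrow> complex mat) \<Rightarrow> complex mat \<Rightarrow> nat \<Rightarrow> real" where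
  "mutual_info_n Q N \<rho> n =
     (let P = joint_pmf Q N \<rho>;
          Xs = {xs::'x list. length xs = n}; Ys = {ys::'y list. length ys = n};
          PX = (\<lambda>xs. \<Sum>ys\<in>Ys. P xs ys); PY = (\<lambda>ys. \<Sum>xs\<in>Xs. P xs ys)
      in \<Sum>xs\<in>Xs. \<Sum>ys\<in>Ys. if P xs ys = 0 then 0 else P xs ys * log 2 (P xs ys / (PX xs * PY ys)))"

definition I_n :: "('x::finite \<Rightarrow> real) \<Rightarrow> ('x \<Rightarrow> 'y::finite \<Rightarrow> complex mat \<Rightarrow> complex mat) \<Rightarrow> complex mat \<Rightarrow> nat \<Rightarrow> real" where
  "I_n Q N \<rho> n = mutual_info_n Q N \<rho> n / real n"

end

theory Submission
  imports Defs "Jordan_Normal_Form.Spectral_Radius"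
begin

lemma mat_adjoint_dim[simp]:
  "dim_row (mat_adjoint A) = dim_col A" "dim_col (mat_adjoint A) = dim_row A"
  unfolding mat_adjoint_def by auto

lemma mat_adjoint_index[simp]:
  "i < dim_col A \<Longrightarrow> j < dim_row A \<Longrightarrow> mat_adjoint A $$ (i,j) = cnj (A $$ (j,i))"
  unfolding mat_adjoint_def by (auto simp: mat_of_rows_def)

lemma herm_entry:
  fixes A :: "complex mat"
  assumes "A \<in> carrier_mat n n" "mat_adjoint A = A" "i < n" "j < n"
  shows "A $$ (i,j) = cnj (A $$ (j,i))"
proof -
  have "A $$ (i,j) = mat_adjoint A $$ (i,j)" using assms(2) by simp
  also have "\<dots> = cnj (A $$ (j,i))" using assms(1,3,4) by simp
  finally show ?thesis .
qed

lemma cip: fixes u v :: "complex vec" shows "dim_vec u = dim_vec v \<Longrightarrow>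
   conjugate u \<bullet> v = (\<Sum>i<dim_vec v. cnj (u $ i) * v $ i)"
  unfolding scalar_prod_def by (auto simp: lessThan_atLeast0 intro!: sum.cong)

lemma mv_index: fixes A :: "complex mat" shows "i < dim_row A \<Longrightarrow> dim_col A = dim_vec v \<Longrightarrow>
   (A *\<^sub>v v) $ i = (\<Sum>j<dim_vec v. A $$ (i,j) * v $ j)"
  by (auto simp: scalar_prod_def lessThan_atLeast0 intro!: sum.cong)

lemma adj_sprod:
  fixes A :: "complex mat"
  assumes A: "A \<in> carrier_mat n n" and h: "mat_adjoint A = A"
    and v: "v \<in> carrier_vec n" and w: "w \<in> carrier_vec n"
  shows "conjugate (A *\<^sub>v v) \<bullet> w = conjugate v \<bullet> (A *\<^sub>v w)"
proof -
  have ev: "\<And>i. i<n \<Longrightarrow> (A *\<^sub>v v) $ i = (\<Sum>j<n. A $$ (i,j) * v $ j)"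
    using mv_index A v by auto
  have ew: "\<And>i. i<n \<Longrightarrow> (A *\<^sub>v w) $ i = (\<Sum>j<n. A $$ (i,j) * w $ j)"
    using mv_index A w by auto
  have hc: "\<And>i j. i<n \<Longrightarrow> j<n \<Longrightarrow> cnj (A $$ (i,j)) = A $$ (j,i)"
    using herm_entry[OF A h] by metis
  have "conjugate (A *\<^sub>v v) \<bullet> w = (\<Sum>i<n. cnj ((A *\<^sub>v v) $ i) * w $ i)"
    using A v w by (simp add: cip)
  also have "\<dots> = (\<Sum>i<n. \<Sum>j<n. cnj (v $ j) * (A $$ (j,i) * w $ i))"
    by (rule sum.cong, simp, auto simp: ev sum_distrib_right sum_distrib_left hc ac_simps intro!: sum.cong)
  also have "\<dots> = (\<Sum>j<n. \<Sum>i<n. cnj (v $ j) * (A $$ (j,i) * w $ i))"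
    by (rule sum.swap)
  also have "\<dots> = (\<Sum>j<n. cnj (v $ j) * (A *\<^sub>v w) $ j)"
    by (rule sum.cong, simp, simp add: ew sum_distrib_left)
  also have "\<dots> = conjugate v \<bullet> (A *\<^sub>v w)"
    using A v w by (simp add: cip)
  finally show ?thesis .
qed

lemma cip_self_real: fixes v :: "complex vec" shows "v \<in> carrier_vec n \<Longrightarrow> conjugate v \<bullet> v = (\<Sum>i<n. of_real ((cmod (v $ i))^2))"
  by (simp add: cip complex_norm_square[symmetric] mult.commute del: of_real_power)

lemma cip_self_zero: fixes v :: "complex vec" shows "v \<in> carrier_vec n \<Longrightarrow> conjugate v \<bullet> v = 0 \<longleftrightarrow> v = 0\<^sub>v n"
proof -
  assume v: "v \<in> carrier_vec n"
  have "conjugate v \<bullet> v = v \<bullet>c v" using conjugate_vec_sprod_comm[OF v v] by simp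
  then show ?thesis using conjugate_square_eq_0_vec[OF v] by simp
qed


definition ON :: "complex vec list \<Rightarrow> bool" where
  "ON ws \<longleftrightarrow> (\<forall>i<length ws. \<forall>j<length ws. conjugate (ws!i) \<bullet> (ws!j) = (if i = j then 1 else 0))"

lemma ON_complete_zero:
  fixes y :: "complex vec"
  assumes len: "length ws = n" and ws: "set ws \<subseteq> carrier_vec n" and on: "ON ws"
    and y: "y \<in> carrier_vec n" and z: "\<forall>i<n. conjugate (ws!i) \<bullet> y = 0"
  shows "y = 0\<^sub>v n"
proof -
  define R where "R = mat_of_rows n (map conjugate ws)"
  define C where "C = mat_of_cols n ws"
  have R: "R \<in> carrier_mat n n" unfolding R_def using mat_of_rows_carrier(1)[of n "map conjugate ws"] len by simp
  have C: "C \<in> carrier_mat n n" unfolding C_def using mat_of_cols_carrier(1)[of n ws] len by simp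
  have wsi: "\<And>i. i < n \<Longrightarrow> ws ! i \<in> carrier_vec n" using ws len by auto
  have rowR: "\<And>i. i < n \<Longrightarrow> row R i = conjugate (ws ! i)"
    unfolding R_def using len wsi by (simp add: mat_of_rows_row)
  have RC: "R * C = 1\<^sub>m n"
  proof (rule eq_matI)
    fix i j assume i: "i < dim_row (1\<^sub>m n :: complex mat)" and j: "j < dim_col (1\<^sub>m n :: complex mat)"
    then have "(R * C) $$ (i,j) = conjugate (ws!i) \<bullet> (ws!j)"
      using R C rowR[of i] len wsi[of j] unfolding C_def by simp
    also have "\<dots> = (1\<^sub>m n :: complex mat) $$ (i,j)" using on i j len unfolding ON_def by auto
    finally show "(R * C) $$ (i,j) = (1\<^sub>m n :: complex mat) $$ (i,j)" .
  qed (use R C in auto)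
  have CR: "C * R = 1\<^sub>m n" using mat_mult_left_right_inverse[OF R C RC] .
  have Ry: "R *\<^sub>v y = 0\<^sub>v n"
    by (rule eq_vecI, insert R z rowR, auto)
  have "y = (C * R) *\<^sub>v y" using CR y by simp
  also have "\<dots> = C *\<^sub>v (R *\<^sub>v y)" using C R y by simp
  also have "\<dots> = 0\<^sub>v n" using Ry C by (intro eq_vecI, auto)
  finally show ?thesis .
qed


definition lc :: "nat \<Rightarrow> complex vec list \<Rightarrow> complex vec \<Rightarrow> complex vec" where
  "lc n vs z = vec n (\<lambda>i. \<Sum>l<length vs. z $ l * (vs!l) $ i)"

lemma lc_carrier[simp]: "lc n vs z \<in> carrier_vec n"
  unfolding lc_def by simp

lemma lc_ip_right:
  assumes vs: "set vs \<subseteq> carrier_vec n" and w: "w \<in> carrier_vec n"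
  shows "conjugate w \<bullet> lc n vs z = (\<Sum>l<length vs. z $ l * (conjugate w \<bullet> vs!l))"
proof -
  have vsl: "\<And>l. l < length vs \<Longrightarrow> vs!l \<in> carrier_vec n" using vs by auto
  have "conjugate w \<bullet> lc n vs z = (\<Sum>i<n. cnj (w $ i) * (\<Sum>l<length vs. z $ l * (vs!l) $ i))"
    using w by (simp add: cip lc_def)
  also have "\<dots> = (\<Sum>i<n. \<Sum>l<length vs. z $ l * (cnj (w $ i) * (vs!l) $ i))"
    by (simp add: sum_distrib_left ac_simps)
  also have "\<dots> = (\<Sum>l<length vs. \<Sum>i<n. z $ l * (cnj (w $ i) * (vs!l) $ i))"
    by (rule sum.swap)
  also have "\<dots> = (\<Sum>l<length vs. z $ l * (conjugate w \<bullet> vs!l))"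
  proof (rule sum.cong, simp)
    fix l assume "l \<in> {..<length vs}"
    then have "vs!l \<in> carrier_vec n" using vsl by auto
    then show "(\<Sum>i<n. z $ l * (cnj (w $ i) * (vs!l) $ i)) = z $ l * (conjugate w \<bullet> vs!l)"
      using w by (simp add: cip sum_distrib_left)
  qed
  finally show ?thesis .
qed

lemma lc_ip_left:
  assumes vs: "set vs \<subseteq> carrier_vec n" and y: "y \<in> carrier_vec n"
  shows "conjugate (lc n vs z) \<bullet> y = (\<Sum>l<length vs. cnj (z $ l) * (conjugate (vs!l) \<bullet> y))"
proof -
  have vsl: "\<And>l. l < length vs \<Longrightarrow> vs!l \<in> carrier_vec n" using vs by auto
  have "conjugate (lc n vs z) \<bullet> y = (\<Sum>i<n. cnj (\<Sum>l<length vs. z $ l * (vs!l) $ i) * y $ i)"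
    using y by (simp add: cip lc_def)
  also have "\<dots> = (\<Sum>i<n. \<Sum>l<length vs. cnj (z $ l) * (cnj ((vs!l) $ i) * y $ i))"
    by (simp add: sum_distrib_right sum_distrib_left ac_simps)
  also have "\<dots> = (\<Sum>l<length vs. \<Sum>i<n. cnj (z $ l) * (cnj ((vs!l) $ i) * y $ i))"
    by (rule sum.swap)
  also have "\<dots> = (\<Sum>l<length vs. cnj (z $ l) * (conjugate (vs!l) \<bullet> y))"
  proof (rule sum.cong, simp)
    fix l assume "l \<in> {..<length vs}"
    then have "vs!l \<in> carrier_vec n" using vsl by auto
    then show "(\<Sum>i<n. cnj (z $ l) * (cnj ((vs!l) $ i) * y $ i)) = cnj (z $ l) * (conjugate (vs!l) \<bullet> y)"
      using y by (simp add: cip sum_distrib_left)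
  qed
  finally show ?thesis .
qed

lemma sum_delta_nat: "j < (m::nat) \<Longrightarrow> (\<Sum>l<m. f l * (if l = j then 1 else 0)) = (f j :: complex)"
  by (simp add: if_distrib cong: if_cong)

lemma lc_ON:
  assumes vs: "set vs \<subseteq> carrier_vec n" and on: "ON vs"
    and z: "z \<in> carrier_vec (length vs)" and z': "z' \<in> carrier_vec (length vs)"
  shows "conjugate (lc n vs z) \<bullet> lc n vs z' = conjugate z \<bullet> z'"
proof -
  have vsl: "\<And>l. l < length vs \<Longrightarrow> vs!l \<in> carrier_vec n" using vs by auto
  have "conjugate (lc n vs z) \<bullet> lc n vs z' = (\<Sum>l<length vs. cnj (z $ l) * (conjugate (vs!l) \<bullet> lc n vs z'))"
    by (rule lc_ip_left[OF vs lc_carrier])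
  also have "\<dots> = (\<Sum>l<length vs. cnj (z $ l) * z' $ l)"
  proof (rule sum.cong, simp)
    fix l assume l: "l \<in> {..<length vs}"
    have "conjugate (vs!l) \<bullet> lc n vs z' = (\<Sum>k<length vs. z' $ k * (conjugate (vs!l) \<bullet> vs!k))"
      using lc_ip_right[OF vs vsl] l by auto
    also have "\<dots> = (\<Sum>k<length vs. z' $ k * (if k = l then 1 else 0))"
      using on l unfolding ON_def by (intro sum.cong, auto)
    also have "\<dots> = z' $ l" using l by (simp add: sum_delta_nat)
    finally show "cnj (z $ l) * (conjugate (vs!l) \<bullet> lc n vs z') = cnj (z $ l) * z' $ l" by simp
  qed
  also have "\<dots> = conjugate z \<bullet> z'" using z z' by (simp add: cip)
  finally show ?thesis .
qed


lemma cnj_eq_real: "cnj e = e \<Longrightarrow> e = complex_of_real (Re e)"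
  by (simp add: complex_eq_iff)

lemma eigen_normalized:
  fixes A :: "complex mat"
  assumes A: "A \<in> carrier_mat n n" and h: "mat_adjoint A = A" and n: "n > 0"
  shows "\<exists>v e. v \<in> carrier_vec n \<and> conjugate v \<bullet> v = 1 \<and> A *\<^sub>v v = complex_of_real e \<cdot>\<^sub>v v"
proof -
  obtain e where ev: "eigenvalue A e" using spectrum_non_empty[OF A n] unfolding spectrum_def by auto
  define v0 where "v0 = find_eigenvector A e"
  have "eigenvector A v0 e" using find_eigenvector[OF A ev] unfolding v0_def .
  hence v0: "v0 \<in> carrier_vec n" "v0 \<noteq> 0\<^sub>v n" "A *\<^sub>v v0 = e \<cdot>\<^sub>v v0"
    unfolding eigenvector_def using A by auto
  define r where "r = (\<Sum>i<n. (cmod (v0 $ i))^2)"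
  have r0: "conjugate v0 \<bullet> v0 = complex_of_real r" unfolding r_def using cip_self_real[OF v0(1)] by simp
  have "r \<noteq> 0" using r0 cip_self_zero[OF v0(1)] v0(2) by auto
  moreover have "r \<ge> 0" unfolding r_def by (intro sum_nonneg, auto)
  ultimately have rpos: "r > 0" by simp
  have "conjugate (A *\<^sub>v v0) \<bullet> v0 = conjugate v0 \<bullet> (A *\<^sub>v v0)" by (rule adj_sprod[OF A h v0(1) v0(1)])
  hence "cnj e * (conjugate v0 \<bullet> v0) = e * (conjugate v0 \<bullet> v0)"
    unfolding v0(3) conjugate_smult_vec using v0(1) by simp
  hence "cnj e = e" using r0 rpos by simp
  hence ereal: "e = complex_of_real (Re e)" by (rule cnj_eq_real)
  define c where "c = complex_of_real (1 / sqrt r)"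
  define v where "v = c \<cdot>\<^sub>v v0"
  have v: "v \<in> carrier_vec n" unfolding v_def using v0 by simp
  have "conjugate v \<bullet> v = cnj c * c * (conjugate v0 \<bullet> v0)"
    unfolding v_def conjugate_smult_vec using v0(1) by simp
  also have "\<dots> = 1" unfolding r0 c_def using rpos
    by (simp add: field_simps flip: of_real_mult) 
  finally have vv: "conjugate v \<bullet> v = 1" .
  have "A *\<^sub>v v = c \<cdot>\<^sub>v (e \<cdot>\<^sub>v v0)" unfolding v_def using mult_mat_vec[OF A v0(1)] v0(3) by simp
  also have "\<dots> = e \<cdot>\<^sub>v v" unfolding v_def by (auto simp: ac_simps)
  finally have "A *\<^sub>v v = complex_of_real (Re e) \<cdot>\<^sub>v v" using ereal by simp
  then show ?thesis using v vv by blast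
qed


lemma normalize_ip:
  fixes w :: "complex vec"
  assumes w: "w \<in> carrier_vec n" and nz: "conjugate w \<bullet> w \<noteq> 0"
  defines "c \<equiv> complex_of_real (1 / sqrt (Re (conjugate w \<bullet> w)))"
  shows "cnj c * c * (conjugate w \<bullet> w) = 1"
proof -
  define r where "r = (\<Sum>i<n. (cmod (w $ i))^2)"
  have r0: "conjugate w \<bullet> w = complex_of_real r" unfolding r_def using cip_self_real[OF w] by simp
  have "r \<ge> 0" unfolding r_def by (intro sum_nonneg, auto)
  hence rpos: "r > 0" using nz r0 by (cases "r = 0", auto)
  show ?thesis unfolding c_def r0 using rpos by (simp add: field_simps flip: of_real_mult)
qed

lemma ON_completion:
  fixes v :: "complex vec"
  assumes v: "v \<in> carrier_vec n" and vv: "conjugate v \<bullet> v = 1"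
  shows "\<exists>ws. length ws = n \<and> set ws \<subseteq> carrier_vec n \<and> ON ws \<and> ws!0 = v"
proof -
  interpret cof_vec_space n "TYPE(complex)" .
  have v0: "v \<noteq> 0\<^sub>v n" using vv v by auto
  note bc = basis_completion[OF v v0]
  define b where "b = basis_completion v"
  define gs where "gs = gram_schmidt n b"
  have gsr: "corthogonal gs" "set gs \<subseteq> carrier_vec n" "length gs = n"
    using gram_schmidt_result[OF bc(2) bc(4) bc(5) refl] bc(6) unfolding gs_def b_def by auto
  have n0: "n > 0" using v0 v by (cases n, auto)
  have "b = v # tl b" using bc(6,7) n0 unfolding b_def by (cases "basis_completion v", auto)
  hence hdgs: "hd gs = v" unfolding gs_def by (metis gram_schmidt_hd v)
  hence gs0: "gs ! 0 = v" using gsr(3) n0 by (cases gs, auto)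
  have gsc: "\<And>i. i < n \<Longrightarrow> gs!i \<in> carrier_vec n" using gsr by auto
  have ipgs: "\<And>i j. i < n \<Longrightarrow> j < n \<Longrightarrow> conjugate (gs!i) \<bullet> gs!j = 0 \<longleftrightarrow> i \<noteq> j"
  proof -
    fix i j assume i: "i < n" and j: "j < n"
    have "conjugate (conjugate (gs!i) \<bullet> gs!j) = gs!i \<bullet>c gs!j"
      using gsc[OF i] gsc[OF j] by (rule conjugate_conjugate_sprod)
    moreover have "gs!i \<bullet>c gs!j = 0 \<longleftrightarrow> i \<noteq> j" using gsr i j by (auto dest: corthogonalD)
    ultimately show "conjugate (gs!i) \<bullet> gs!j = 0 \<longleftrightarrow> i \<noteq> j"
      by (metis conjugate_zero_iff)
  qed
  define cf where "cf = (\<lambda>w::complex vec. complex_of_real (1 / sqrt (Re (conjugate w \<bullet> w))))"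
  define ws where "ws = map (\<lambda>w. cf w \<cdot>\<^sub>v w) gs"
  have len: "length ws = n" unfolding ws_def using gsr by simp
  have wsc: "set ws \<subseteq> carrier_vec n" unfolding ws_def using gsr by auto
  have on: "ON ws" unfolding ON_def
  proof (intro allI impI)
    fix i j assume i: "i < length ws" and j: "j < length ws"
    hence i': "i < n" and j': "j < n" using len by auto
    have "conjugate (ws!i) \<bullet> ws!j = cnj (cf (gs!i)) * cf (gs!j) * (conjugate (gs!i) \<bullet> gs!j)"
      unfolding ws_def using i' j' gsr gsc[OF i'] gsc[OF j'] by (simp add: conjugate_smult_vec)
    also have "\<dots> = (if i = j then 1 else 0)"
    proof (cases "i = j")
      case True
      have "conjugate (gs!i) \<bullet> gs!i \<noteq> 0" using ipgs[OF i' i'] by simp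
      then show ?thesis using True normalize_ip[OF gsc[OF i']] unfolding cf_def by simp
    next
      case False
      then show ?thesis using ipgs[OF i' j'] by simp
    qed
    finally show "conjugate (ws!i) \<bullet> ws!j = (if i = j then 1 else 0)" .
  qed
  have "ws!0 = cf v \<cdot>\<^sub>v v" unfolding ws_def using gs0 gsr n0 by simp
  also have "cf v = 1" unfolding cf_def vv by simp
  finally have "ws!0 = v" by simp
  then show ?thesis using len wsc on by blast
qed


lemma spectral:
  fixes A :: "complex mat"
  assumes "A \<in> carrier_mat n n" "mat_adjoint A = A"
  shows "\<exists>us lam. length us = n \<and> set us \<subseteq> carrier_vec n \<and> ON us \<and>
     (\<forall>i<n. A *\<^sub>v (us!i) = complex_of_real (lam i) \<cdot>\<^sub>v (us!i))"
  using assms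
proof (induction n arbitrary: A)
  case 0
  then show ?case by (intro exI[of _ "[]"], auto simp: ON_def)
next
  case (Suc m A)
  define n where "n = Suc m"
  have A: "A \<in> carrier_mat n n" and h: "mat_adjoint A = A" using Suc.prems unfolding n_def by auto
  obtain v e where v: "v \<in> carrier_vec n" and vv: "conjugate v \<bullet> v = 1"
    and Av: "A *\<^sub>v v = complex_of_real e \<cdot>\<^sub>v v"
    using eigen_normalized[OF A h] unfolding n_def by auto
  obtain ws where len: "length ws = n" and wsc: "set ws \<subseteq> carrier_vec n" and on: "ON ws"
    and ws0: "ws!0 = v" using ON_completion[OF v vv] by auto
  define vs where "vs = tl ws"
  have lvs: "length vs = m" unfolding vs_def using len n_def by simp
  have vsi: "\<And>i. i < m \<Longrightarrow> vs!i = ws!(Suc i)" unfolding vs_def using len n_def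
    by (cases ws, auto)
  have vsc: "set vs \<subseteq> carrier_vec n" unfolding vs_def using wsc by (cases ws, auto)
  have vsc': "\<And>i. i < m \<Longrightarrow> vs!i \<in> carrier_vec n" using vsc lvs by auto
  have wsc': "\<And>i. i < n \<Longrightarrow> ws!i \<in> carrier_vec n" using wsc len by auto
  have onws: "\<And>i j. i < n \<Longrightarrow> j < n \<Longrightarrow> conjugate (ws!i) \<bullet> (ws!j) = (if i = j then 1 else 0)"
    using on len unfolding ON_def by auto
  have onvs: "ON vs" unfolding ON_def lvs using onws vsi n_def by auto
  have v_vs: "\<And>i. i < m \<Longrightarrow> conjugate v \<bullet> vs!i = 0"
    using onws[of 0] vsi ws0 n_def by auto
  have vs_v: "\<And>i. i < m \<Longrightarrow> conjugate (vs!i) \<bullet> v = 0"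
    using onws[of _ 0] vsi ws0 n_def by auto
  define A3 where "A3 = mat m m (\<lambda>(i,j). conjugate (vs!i) \<bullet> (A *\<^sub>v vs!j))"
  have A3: "A3 \<in> carrier_mat m m" unfolding A3_def by simp
  have h3: "mat_adjoint A3 = A3"
  proof (rule eq_matI)
    fix i j assume i: "i < dim_row A3" and j: "j < dim_col A3"
    hence i': "i < m" and j': "j < m" using A3 by auto
    have "mat_adjoint A3 $$ (i,j) = cnj (conjugate (vs!j) \<bullet> (A *\<^sub>v vs!i))"
      using i' j' A3 unfolding A3_def by simp
    also have "\<dots> = vs!j \<bullet>c (A *\<^sub>v vs!i)"
      using vsc'[OF i'] vsc'[OF j'] A conjugate_conjugate_sprod[of "vs!j" n "A *\<^sub>v vs!i"] by simp
    also have "\<dots> = conjugate (A *\<^sub>v vs!i) \<bullet> vs!j"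
      using vsc'[OF i'] vsc'[OF j'] A by (subst conjugate_vec_sprod_comm[of _ n], auto)
    also have "\<dots> = conjugate (vs!i) \<bullet> (A *\<^sub>v vs!j)"
      by (rule adj_sprod[OF A h vsc'[OF i'] vsc'[OF j']])
    also have "\<dots> = A3 $$ (i,j)" unfolding A3_def using i' j' by simp
    finally show "mat_adjoint A3 $$ (i,j) = A3 $$ (i,j)" .
  qed (use A3 in auto)
  obtain zs mu where lzs: "length zs = m" and zsc: "set zs \<subseteq> carrier_vec m" and onzs: "ON zs"
    and ezs: "\<forall>i<m. A3 *\<^sub>v (zs!i) = complex_of_real (mu i) \<cdot>\<^sub>v (zs!i)"
    using Suc.IH[OF A3 h3] by auto
  have zsc': "\<And>i. i < m \<Longrightarrow> zs!i \<in> carrier_vec m" using zsc lzs by auto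
  define us where "us = v # map (lc n vs) zs"
  define lam where "lam = (\<lambda>i. if i = 0 then e else mu (i - 1))"
  have lus: "length us = n" unfolding us_def using lzs n_def by simp
  have usc: "set us \<subseteq> carrier_vec n" unfolding us_def using v by auto
  have us0: "us!0 = v" unfolding us_def by simp
  have usS: "\<And>i. i < m \<Longrightarrow> us!(Suc i) = lc n vs (zs!i)" unfolding us_def using lzs by simp
  have v_lc: "\<And>z. conjugate v \<bullet> lc n vs z = 0"
    using lc_ip_right[OF vsc v] v_vs lvs by simp
  have lc_v: "\<And>z. conjugate (lc n vs z) \<bullet> v = 0"
    using lc_ip_left[OF vsc v] vs_v lvs by simp
  have onus: "ON us" unfolding ON_def lus
  proof (intro allI impI)
    fix i j assume i: "i < n" and j: "j < n"
    show "conjugate (us!i) \<bullet> us!j = (if i = j then 1 else 0)"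
    proof (cases i)
      case 0
      then show ?thesis
      proof (cases j)
        case 0 then show ?thesis using \<open>i = 0\<close> us0 vv by simp
      next
        case (Suc j') then show ?thesis using \<open>i = 0\<close> us0 usS[of j'] j n_def v_lc by simp
      qed
    next
      case (Suc i')
      then show ?thesis
      proof (cases j)
        case 0 then show ?thesis using \<open>i = Suc i'\<close> us0 usS[of i'] i n_def lc_v by simp
      next
        case (Suc j')
        have "conjugate (us!i) \<bullet> us!j = conjugate (zs!i') \<bullet> zs!j'"
          using \<open>i = Suc i'\<close> Suc usS i j n_def lc_ON[OF vsc onvs] zsc' lvs by simp
        also have "\<dots> = (if i = j then 1 else 0)"
          using onzs lzs \<open>i = Suc i'\<close> Suc i j n_def unfolding ON_def by simp
        finally show ?thesis .
      qed
    qed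
  qed
  have eig: "A *\<^sub>v (us!i) = complex_of_real (lam i) \<cdot>\<^sub>v (us!i)" if i: "i < n" for i
  proof (cases i)
    case 0 then show ?thesis using us0 Av unfolding lam_def by simp
  next
    case (Suc i')
    have i': "i' < m" using i Suc n_def by simp
    define z where "z = zs!i'"
    have z: "z \<in> carrier_vec m" unfolding z_def using zsc'[OF i'] .
    have Az: "A3 *\<^sub>v z = complex_of_real (mu i') \<cdot>\<^sub>v z" using ezs i' unfolding z_def by simp
    define x where "x = lc n vs z"
    define y where "y = A *\<^sub>v x - complex_of_real (mu i') \<cdot>\<^sub>v x"
    have x: "x \<in> carrier_vec n" unfolding x_def by simp
    have y: "y \<in> carrier_vec n" unfolding y_def using A x by simp
    have "y = 0\<^sub>v n"
    proof (rule ON_complete_zero[OF len wsc on y], intro allI impI)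
      fix k assume k: "k < n"
      have yk: "conjugate (ws!k) \<bullet> y = conjugate (ws!k) \<bullet> (A *\<^sub>v x) - complex_of_real (mu i') * (conjugate (ws!k) \<bullet> x)"
        unfolding y_def using wsc'[OF k] A x
        by (subst scalar_prod_minus_distrib[of _ n], auto)
      show "conjugate (ws!k) \<bullet> y = 0"
      proof (cases k)
        case 0
        have "conjugate (ws!k) \<bullet> (A *\<^sub>v x) = conjugate (A *\<^sub>v v) \<bullet> x"
          using 0 ws0 adj_sprod[OF A h v x] by simp
        also have "\<dots> = 0" unfolding Av using v x v_lc
          smult_scalar_prod_distrib[of "conjugate v" n "lc n vs z" "cnj (complex_of_real e)"]
          unfolding x_def by (simp add: conjugate_smult_vec)
        finally show ?thesis using yk 0 ws0 v_lc unfolding x_def by simp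
      next
        case (Suc k')
        have k': "k' < m" using k Suc n_def by simp
        have wk: "ws!k = vs!k'" using vsi[OF k'] Suc by simp
        have "conjugate (vs!k') \<bullet> (A *\<^sub>v x) = conjugate (A *\<^sub>v vs!k') \<bullet> x"
          using adj_sprod[OF A h vsc'[OF k'] x] by simp
        also have "\<dots> = (\<Sum>l<m. z $ l * (conjugate (A *\<^sub>v vs!k') \<bullet> vs!l))"
          unfolding x_def using lc_ip_right[OF vsc, of "A *\<^sub>v vs!k'" z] A vsc'[OF k'] lvs by simp
        also have "\<dots> = (\<Sum>l<m. A3 $$ (k', l) * z $ l)"
        proof (rule sum.cong, simp)
          fix l assume "l \<in> {..<m}"
          hence l: "l < m" by simp
          show "z $ l * (conjugate (A *\<^sub>v vs!k') \<bullet> vs!l) = A3 $$ (k', l) * z $ l"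
            using adj_sprod[OF A h vsc'[OF k'] vsc'[OF l]] k' l unfolding A3_def by simp
        qed
        also have "\<dots> = (A3 *\<^sub>v z) $ k'" using mv_index[of k' A3 z] A3 z k' by simp
        also have "\<dots> = complex_of_real (mu i') * z $ k'" using Az z k' by simp
        finally have e1: "conjugate (vs!k') \<bullet> (A *\<^sub>v x) = complex_of_real (mu i') * z $ k'" .
        have "conjugate (vs!k') \<bullet> x = (\<Sum>l<m. z $ l * (if k' = l then 1 else 0))"
          unfolding x_def using lc_ip_right[OF vsc vsc'[OF k'], of z] lvs onvs k'
          unfolding ON_def by (simp add: lvs)
        also have "\<dots> = z $ k'" using k' by (simp add: if_distrib cong: if_cong)
        finally have e2: "conjugate (vs!k') \<bullet> x = z $ k'" .
        show ?thesis using yk wk e1 e2 by simp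
      qed
    qed
    have "A *\<^sub>v x = complex_of_real (mu i') \<cdot>\<^sub>v x"
    proof (rule eq_vecI)
      fix k assume "k < dim_vec (complex_of_real (mu i') \<cdot>\<^sub>v x)"
      hence k: "k < n" using x by simp
      have "y $ k = 0" using \<open>y = 0\<^sub>v n\<close> k by simp
      moreover have "y $ k = (A *\<^sub>v x) $ k - (complex_of_real (mu i') \<cdot>\<^sub>v x) $ k"
        unfolding y_def using A x k by simp
      ultimately show "(A *\<^sub>v x) $ k = (complex_of_real (mu i') \<cdot>\<^sub>v x) $ k" by simp
    qed (use A x in simp)
    then show ?thesis using usS[OF i'] Suc unfolding lam_def x_def z_def by simp
  qed
  show ?case unfolding n_def[symmetric] using lus usc onus eig by blast
qed


lemma basis_eq:
  fixes M M' :: "complex mat"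
  assumes len: "length us = n" and usc: "set us \<subseteq> carrier_vec n" and on: "ON us"
    and M: "M \<in> carrier_mat n n" and M': "M' \<in> carrier_mat n n"
    and eq: "\<forall>j<n. M *\<^sub>v (us!j) = M' *\<^sub>v (us!j)"
  shows "M = M'"
proof -
  define R where "R = mat_of_rows n (map conjugate us)"
  define C where "C = mat_of_cols n us"
  have R: "R \<in> carrier_mat n n" unfolding R_def using mat_of_rows_carrier(1)[of n "map conjugate us"] len by simp
  have C: "C \<in> carrier_mat n n" unfolding C_def using mat_of_cols_carrier(1)[of n us] len by simp
  have usi: "\<And>i. i < n \<Longrightarrow> us ! i \<in> carrier_vec n" using usc len by auto
  have rowR: "\<And>i. i < n \<Longrightarrow> row R i = conjugate (us ! i)"
    unfolding R_def using len usi by (simp add: mat_of_rows_row)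
  have RC: "R * C = 1\<^sub>m n"
  proof (rule eq_matI)
    fix i j assume i: "i < dim_row (1\<^sub>m n :: complex mat)" and j: "j < dim_col (1\<^sub>m n :: complex mat)"
    then have "(R * C) $$ (i,j) = conjugate (us!i) \<bullet> (us!j)"
      using R C rowR[of i] len usi[of j] unfolding C_def by simp
    also have "\<dots> = (1\<^sub>m n :: complex mat) $$ (i,j)" using on i j len unfolding ON_def by auto
    finally show "(R * C) $$ (i,j) = (1\<^sub>m n :: complex mat) $$ (i,j)" .
  qed (use R C in auto)
  have CR: "C * R = 1\<^sub>m n" using mat_mult_left_right_inverse[OF R C RC] .
  have MC: "M * C = M' * C"
  proof (rule eq_matI)
    fix i j assume i: "i < dim_row (M' * C)" and j: "j < dim_col (M' * C)"
    hence i': "i < n" and j': "j < n" using M' C by auto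
    have cj: "col C j = us ! j" unfolding C_def using len usi[OF j'] j' by simp
    have "(M * C) $$ (i,j) = (M *\<^sub>v col C j) $ i" using M C i' j' by simp
    also have "\<dots> = (M' *\<^sub>v col C j) $ i" using eq j' cj by simp
    also have "\<dots> = (M' * C) $$ (i,j)" using M' C i' j' by simp
    finally show "(M * C) $$ (i,j) = (M' * C) $$ (i,j)" .
  qed (use M M' C in auto)
  have "M = M * (C * R)" using CR M by simp
  also have "\<dots> = (M * C) * R" using M C R by simp
  also have "\<dots> = (M' * C) * R" using MC by simp
  also have "\<dots> = M' * (C * R)" using M' C R by simp
  also have "\<dots> = M'" using CR M' by simp
  finally show ?thesis .
qed

definition fc :: "nat \<Rightarrow> complex vec list \<Rightarrow> (nat \<Rightarrow> real) \<Rightarrow> complex mat" where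
  "fc n us g = mat n n (\<lambda>(i,j). \<Sum>k<n. complex_of_real (g k) * ((us!k) $ i * cnj ((us!k) $ j)))"

lemma fc_carrier[simp]: "fc n us g \<in> carrier_mat n n"
  unfolding fc_def by simp

lemma fc_mv:
  assumes len: "length us = n" and usc: "set us \<subseteq> carrier_vec n"
    and x: "x \<in> carrier_vec n" and i: "i < n"
  shows "(fc n us g *\<^sub>v x) $ i = (\<Sum>k<n. complex_of_real (g k) * (conjugate (us!k) \<bullet> x) * (us!k) $ i)"
proof -
  have "(fc n us g *\<^sub>v x) $ i = (\<Sum>j<n. (\<Sum>k<n. complex_of_real (g k) * ((us!k) $ i * cnj ((us!k) $ j))) * x $ j)"
    using mv_index[of i "fc n us g" x] x i unfolding fc_def by simp
  also have "\<dots> = (\<Sum>j<n. \<Sum>k<n. complex_of_real (g k) * (us!k) $ i * (cnj ((us!k) $ j) * x $ j))"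
    by (rule sum.cong, simp, simp add: sum_distrib_right, rule sum.cong, simp, simp add: ac_simps)
  also have "\<dots> = (\<Sum>k<n. \<Sum>j<n. complex_of_real (g k) * (us!k) $ i * (cnj ((us!k) $ j) * x $ j))"
    by (rule sum.swap)
  also have "\<dots> = (\<Sum>k<n. complex_of_real (g k) * (us!k) $ i * (\<Sum>j<n. cnj ((us!k) $ j) * x $ j))"
    by (simp add: sum_distrib_left)
  also have "\<dots> = (\<Sum>k<n. complex_of_real (g k) * (conjugate (us!k) \<bullet> x) * (us!k) $ i)"
  proof (rule sum.cong, simp)
    fix k assume "k \<in> {..<n}"
    hence "us!k \<in> carrier_vec n" using len usc by auto
    then show "complex_of_real (g k) * (us!k) $ i * (\<Sum>j<n. cnj ((us!k) $ j) * x $ j) =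
      complex_of_real (g k) * (conjugate (us!k) \<bullet> x) * (us!k) $ i"
      using x by (simp add: cip)
  qed
  finally show ?thesis .
qed

lemma fc_eigen:
  assumes len: "length us = n" and usc: "set us \<subseteq> carrier_vec n" and on: "ON us" and m: "m < n"
  shows "fc n us g *\<^sub>v (us!m) = complex_of_real (g m) \<cdot>\<^sub>v (us!m)"
proof -
  have um: "us!m \<in> carrier_vec n" using usc len m by auto
  have onv: "\<And>k. k < n \<Longrightarrow> conjugate (us!k) \<bullet> (us!m) = (if k = m then 1 else 0)"
    using on len m unfolding ON_def by simp
  have ix: "(fc n us g *\<^sub>v (us!m)) $ i = (complex_of_real (g m) \<cdot>\<^sub>v (us!m)) $ i" if i: "i < n" for i
  proof -
    have "(fc n us g *\<^sub>v (us!m)) $ i = (\<Sum>k<n. complex_of_real (g k) * (conjugate (us!k) \<bullet> (us!m)) * (us!k) $ i)"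
      by (rule fc_mv[OF len usc um i])
    also have "\<dots> = (\<Sum>k<n. if k = m then complex_of_real (g k) * (us!k) $ i else 0)"
      by (rule sum.cong, simp, simp add: onv)
    also have "\<dots> = complex_of_real (g m) * (us!m) $ i" using m by (simp add: sum.delta)
    finally show ?thesis using i um by simp
  qed
  have d1: "dim_vec (fc n us g *\<^sub>v (us!m)) = n" by (simp add: fc_def)
  have d2: "dim_vec (complex_of_real (g m) \<cdot>\<^sub>v (us!m)) = n" using um by simp
  show ?thesis by (rule eq_vecI, use ix d2 in simp, use d1 d2 in simp)
qed

lemma mcnj: "z * cnj z = (complex_of_real (cmod z))^2"
  by (metis complex_norm_square of_real_power)

lemma fc_quad:
  assumes len: "length us = n" and usc: "set us \<subseteq> carrier_vec n" and x: "x \<in> carrier_vec n"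
  shows "conjugate x \<bullet> (fc n us g *\<^sub>v x) = (\<Sum>k<n. complex_of_real (g k * (cmod (conjugate (us!k) \<bullet> x))^2))"
proof -
  have "conjugate x \<bullet> (fc n us g *\<^sub>v x) = (\<Sum>i<n. cnj (x $ i) * (\<Sum>k<n. complex_of_real (g k) * (conjugate (us!k) \<bullet> x) * (us!k) $ i))"
  proof -
    have d: "dim_vec (fc n us g *\<^sub>v x) = n" by (simp add: fc_def)
    have "conjugate x \<bullet> (fc n us g *\<^sub>v x) = (\<Sum>i<n. cnj (x $ i) * (fc n us g *\<^sub>v x) $ i)"
      using cip[of x "fc n us g *\<^sub>v x"] x d by simp
    also have "\<dots> = (\<Sum>i<n. cnj (x $ i) * (\<Sum>k<n. complex_of_real (g k) * (conjugate (us!k) \<bullet> x) * (us!k) $ i))"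
      by (rule sum.cong, simp, simp add: fc_mv[OF len usc x])
    finally show ?thesis .
  qed
  also have "\<dots> = (\<Sum>i<n. \<Sum>k<n. complex_of_real (g k) * (conjugate (us!k) \<bullet> x) * (cnj (x $ i) * (us!k) $ i))"
    by (rule sum.cong, simp, simp add: sum_distrib_left mult.commute mult.left_commute)
  also have "\<dots> = (\<Sum>k<n. \<Sum>i<n. complex_of_real (g k) * (conjugate (us!k) \<bullet> x) * (cnj (x $ i) * (us!k) $ i))"
    by (rule sum.swap)
  also have "\<dots> = (\<Sum>k<n. complex_of_real (g k) * (conjugate (us!k) \<bullet> x) * (\<Sum>i<n. cnj (x $ i) * (us!k) $ i))"
    by (simp add: sum_distrib_left)
  also have "\<dots> = (\<Sum>k<n. complex_of_real (g k) * (conjugate (us!k) \<bullet> x) * cnj (conjugate (us!k) \<bullet> x))"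
  proof (rule sum.cong, simp)
    fix k assume "k \<in> {..<n}"
    hence uk: "us!k \<in> carrier_vec n" using len usc by auto
    have "cnj (\<Sum>i<n. cnj ((us!k) $ i) * x $ i) = (\<Sum>i<n. cnj (x $ i) * (us!k) $ i)"
      by (simp add: ac_simps)
    moreover have "conjugate (us!k) \<bullet> x = (\<Sum>i<n. cnj ((us!k) $ i) * x $ i)"
      using x uk by (simp add: cip)
    ultimately show "complex_of_real (g k) * (conjugate (us!k) \<bullet> x) * (\<Sum>i<n. cnj (x $ i) * (us!k) $ i)
      = complex_of_real (g k) * (conjugate (us!k) \<bullet> x) * cnj (conjugate (us!k) \<bullet> x)" by simp
  qed
  also have "\<dots> = (\<Sum>k<n. complex_of_real (g k * (cmod (conjugate (us!k) \<bullet> x))^2))"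
    by (rule sum.cong, simp, simp add: mcnj mult.assoc)
  finally show ?thesis .
qed

lemma fc_adjoint: "mat_adjoint (fc n us g) = fc n us g"
  by (rule eq_matI, auto simp: fc_def ac_simps)

lemma fc_trace:
  assumes len: "length us = n" and usc: "set us \<subseteq> carrier_vec n" and on: "ON us"
  shows "mtrace (fc n us g) = complex_of_real (\<Sum>k<n. g k)"
proof -
  have "mtrace (fc n us g) = (\<Sum>i<n. \<Sum>k<n. complex_of_real (g k) * ((us!k) $ i * cnj ((us!k) $ i)))"
    unfolding mtrace_def fc_def by simp
  also have "\<dots> = (\<Sum>k<n. complex_of_real (g k) * (\<Sum>i<n. cnj ((us!k) $ i) * (us!k) $ i))"
    by (subst sum.swap, simp add: sum_distrib_left ac_simps)
  also have "\<dots> = (\<Sum>k<n. complex_of_real (g k))"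
  proof (rule sum.cong, simp)
    fix k assume "k \<in> {..<n}"
    hence k: "k < n" by simp
    have uk: "us!k \<in> carrier_vec n" using usc len k by auto
    have "(\<Sum>i<n. cnj ((us!k) $ i) * (us!k) $ i) = conjugate (us!k) \<bullet> us!k"
      using uk by (simp add: cip)
    also have "\<dots> = 1" using on k len unfolding ON_def by simp
    finally show "complex_of_real (g k) * (\<Sum>i<n. cnj ((us!k) $ i) * (us!k) $ i) = complex_of_real (g k)" by simp
  qed
  finally show ?thesis by simp
qed

lemma fc_minus: "fc n us g - fc n us h = fc n us (\<lambda>k. g k - h k)"
  by (rule eq_matI, auto simp: fc_def sum_subtractf[symmetric] algebra_simps)

lemma fc_psd:
  assumes len: "length us = n" and usc: "set us \<subseteq> carrier_vec n" and "\<forall>k. g k \<ge> 0"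
  shows "psd (fc n us g)"
  unfolding psd_def
proof (intro conjI ballI)
  show "fc n us g \<in> carrier_mat (dim_row (fc n us g)) (dim_row (fc n us g))" by (simp add: fc_def)
  show "mat_adjoint (fc n us g) = fc n us g" by (rule fc_adjoint)
  fix x :: "complex vec" assume "x \<in> carrier_vec (dim_row (fc n us g))"
  hence x: "x \<in> carrier_vec n" by (simp add: fc_def)
  show "0 \<le> Re (conjugate x \<bullet> (fc n us g *\<^sub>v x))"
    unfolding fc_quad[OF len usc x] using assms(3) by (simp add: sum_nonneg)
qed


lemma psd_root_eigen:
  fixes C :: "complex mat"
  assumes C: "C \<in> carrier_mat n n" and pC: "psd C" and u: "u \<in> carrier_vec n"
    and CC: "(C * C) *\<^sub>v u = complex_of_real (c^2) \<cdot>\<^sub>v u" and c: "c \<ge> 0"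
  shows "C *\<^sub>v u = complex_of_real c \<cdot>\<^sub>v u"
proof -
  have h: "mat_adjoint C = C" using pC unfolding psd_def by simp
  have quad: "\<And>x. x \<in> carrier_vec n \<Longrightarrow> 0 \<le> Re (conjugate x \<bullet> (C *\<^sub>v x))"
    using pC C unfolding psd_def by auto
  have Cu: "C *\<^sub>v u \<in> carrier_vec n" using C u by simp
  have CCu: "C *\<^sub>v (C *\<^sub>v u) = complex_of_real (c^2) \<cdot>\<^sub>v u" using CC C u by simp
  show ?thesis
  proof (cases "c = 0")
    case True
    have "conjugate (C *\<^sub>v u) \<bullet> (C *\<^sub>v u) = conjugate u \<bullet> (C *\<^sub>v (C *\<^sub>v u))"
      by (rule adj_sprod[OF C h u Cu])
    also have "\<dots> = 0" unfolding CCu True using u by simp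
    finally have "C *\<^sub>v u = 0\<^sub>v n" using cip_self_zero[OF Cu] by simp
    then show ?thesis using True u by (intro eq_vecI, auto)
  next
    case False
    hence cpos: "c > 0" using c by simp
    define y where "y = C *\<^sub>v u - complex_of_real c \<cdot>\<^sub>v u"
    have y: "y \<in> carrier_vec n" unfolding y_def using Cu u by simp
    have Cy: "C *\<^sub>v y = (- complex_of_real c) \<cdot>\<^sub>v y"
    proof -
      have "C *\<^sub>v y = C *\<^sub>v (C *\<^sub>v u) - C *\<^sub>v (complex_of_real c \<cdot>\<^sub>v u)"
        unfolding y_def using C Cu u by (subst mult_minus_distrib_mat_vec[of _ n n], auto)
      also have "\<dots> = complex_of_real (c^2) \<cdot>\<^sub>v u - complex_of_real c \<cdot>\<^sub>v (C *\<^sub>v u)"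
        unfolding CCu using mult_mat_vec[OF C u] by simp
      also have "\<dots> = (- complex_of_real c) \<cdot>\<^sub>v y"
        unfolding y_def using u Cu C by (intro eq_vecI, auto simp: power2_eq_square algebra_simps)
      finally show ?thesis .
    qed
    have "conjugate y \<bullet> (C *\<^sub>v y) = (- complex_of_real c) * (conjugate y \<bullet> y)"
      unfolding Cy using y by simp
    moreover obtain r where r: "conjugate y \<bullet> y = complex_of_real r" "r \<ge> 0"
      using cip_self_real[OF y] by (intro that[of "\<Sum>i<n. (cmod (y $ i))^2"], auto intro: sum_nonneg)
    ultimately have "0 \<le> - c * r" using quad[OF y] by simp
    hence "r = 0" using cpos r(2) by (simp add: mult_le_0_iff)
    hence "y = 0\<^sub>v n" using cip_self_zero[OF y] r by simp
    show ?thesis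
    proof (rule eq_vecI)
      fix i assume "i < dim_vec (complex_of_real c \<cdot>\<^sub>v u)"
      hence i: "i < n" using u by simp
      have "y $ i = 0" using \<open>y = 0\<^sub>v n\<close> i by simp
      thus "(C *\<^sub>v u) $ i = (complex_of_real c \<cdot>\<^sub>v u) $ i" unfolding y_def using i u C by simp
    qed (use u C in simp)
  qed
qed

lemma sq_eigen:
  fixes M :: "complex mat"
  assumes M: "M \<in> carrier_mat n n" and u: "u \<in> carrier_vec n" and Mu: "M *\<^sub>v u = a \<cdot>\<^sub>v u"
  shows "(M * M) *\<^sub>v u = (a * a) \<cdot>\<^sub>v u"
proof -
  have "(M * M) *\<^sub>v u = M *\<^sub>v (M *\<^sub>v u)" using M u by simp
  also have "\<dots> = M *\<^sub>v (a \<cdot>\<^sub>v u)" using Mu by simp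
  also have "\<dots> = a \<cdot>\<^sub>v (M *\<^sub>v u)" by (rule mult_mat_vec[OF M u])
  also have "\<dots> = a \<cdot>\<^sub>v (a \<cdot>\<^sub>v u)" using Mu by simp
  also have "\<dots> = (a * a) \<cdot>\<^sub>v u" by (auto simp: ac_simps)
  finally show ?thesis .
qed


lemma herm_decomp:
  fixes D :: "complex mat"
  assumes D: "D \<in> carrier_mat n n" and h: "mat_adjoint D = D" and tr: "mtrace D = 0"
  shows "\<exists>P M. P \<in> carrier_mat n n \<and> M \<in> carrier_mat n n \<and> psd P \<and> psd M \<and> D = P - M \<and>
    Re (mtrace P) = trace_dist_norm D \<and> Re (mtrace M) = trace_dist_norm D"
proof -
  obtain us lam where len: "length us = n" and usc: "set us \<subseteq> carrier_vec n" and on: "ON us"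
    and eig: "\<forall>i<n. D *\<^sub>v (us!i) = complex_of_real (lam i) \<cdot>\<^sub>v (us!i)"
    using spectral[OF D h] by blast
  have uc: "\<And>j. j < n \<Longrightarrow> us!j \<in> carrier_vec n" using usc len by auto
  have Dfc: "D = fc n us lam"
    by (rule basis_eq[OF len usc on D fc_carrier], use eig fc_eigen[OF len usc on] in simp)
  define B where "B = fc n us (\<lambda>k. \<bar>lam k\<bar>)"
  have B: "B \<in> carrier_mat n n" unfolding B_def by simp
  have Beig: "\<And>j. j < n \<Longrightarrow> B *\<^sub>v (us!j) = complex_of_real \<bar>lam j\<bar> \<cdot>\<^sub>v (us!j)"
    unfolding B_def using fc_eigen[OF len usc on] by simp
  have pB: "psd B" unfolding B_def by (rule fc_psd[OF len usc], simp)
  have DD: "mat_adjoint D * D = D * D" using h by simp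
  have sqeq: "\<And>j. j < n \<Longrightarrow> (D * D) *\<^sub>v (us!j) = complex_of_real (\<bar>lam j\<bar>^2) \<cdot>\<^sub>v (us!j)"
  proof -
    fix j assume j: "j < n"
    have "(D * D) *\<^sub>v (us!j) = (complex_of_real (lam j) * complex_of_real (lam j)) \<cdot>\<^sub>v (us!j)"
      by (rule sq_eigen[OF D uc[OF j]], use eig j in simp)
    also have "complex_of_real (lam j) * complex_of_real (lam j) = complex_of_real (\<bar>lam j\<bar>^2)"
      by (simp add: power2_eq_square flip: of_real_mult)
    finally show "(D * D) *\<^sub>v (us!j) = complex_of_real (\<bar>lam j\<bar>^2) \<cdot>\<^sub>v (us!j)" .
  qed
  have BB: "B * B = D * D"
  proof (rule basis_eq[OF len usc on])
    show "B * B \<in> carrier_mat n n" using B by simp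
    show "D * D \<in> carrier_mat n n" using D by simp
    show "\<forall>j<n. (B * B) *\<^sub>v us ! j = (D * D) *\<^sub>v us ! j"
    proof (intro allI impI)
      fix j assume j: "j < n"
      have "(B * B) *\<^sub>v (us!j) = (complex_of_real \<bar>lam j\<bar> * complex_of_real \<bar>lam j\<bar>) \<cdot>\<^sub>v (us!j)"
        by (rule sq_eigen[OF B uc[OF j] Beig[OF j]])
      also have "complex_of_real \<bar>lam j\<bar> * complex_of_real \<bar>lam j\<bar> = complex_of_real (\<bar>lam j\<bar>^2)"
        by (simp add: power2_eq_square flip: of_real_mult)
      finally show "(B * B) *\<^sub>v (us!j) = (D * D) *\<^sub>v (us!j)" using sqeq[OF j] by simp
    qed
  qed
  have dc: "dim_col D = n" using D by simp
  have the: "(THE B'. B' \<in> carrier_mat (dim_col D) (dim_col D) \<and> psd B' \<and> B' * B' = mat_adjoint D * D) = B"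
  proof (rule the_equality)
    show "B \<in> carrier_mat (dim_col D) (dim_col D) \<and> psd B \<and> B * B = mat_adjoint D * D"
      using B pB BB DD dc by simp
    fix C assume "C \<in> carrier_mat (dim_col D) (dim_col D) \<and> psd C \<and> C * C = mat_adjoint D * D"
    hence C: "C \<in> carrier_mat n n" and pC: "psd C" and CC: "C * C = D * D" using dc DD by auto
    show "C = B"
    proof (rule basis_eq[OF len usc on C B], intro allI impI)
      fix j assume j: "j < n"
      have "C *\<^sub>v (us!j) = complex_of_real \<bar>lam j\<bar> \<cdot>\<^sub>v (us!j)"
        by (rule psd_root_eigen[OF C pC uc[OF j]], use CC sqeq[OF j] in simp, simp)
      then show "C *\<^sub>v (us!j) = B *\<^sub>v (us!j)" using Beig[OF j] by simp
    qed
  qed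
  have tdn: "trace_dist_norm D = (\<Sum>k<n. \<bar>lam k\<bar>) / 2"
    unfolding trace_dist_norm_def the B_def fc_trace[OF len usc on] by simp
  have sl: "(\<Sum>k<n. lam k) = 0"
    using tr unfolding Dfc fc_trace[OF len usc on] by (simp del: of_real_sum)
  define P where "P = fc n us (\<lambda>k. max (lam k) 0)"
  define M where "M = fc n us (\<lambda>k. max (- lam k) 0)"
  have PM: "D = P - M" unfolding P_def M_def fc_minus Dfc
    by (rule arg_cong[where f="fc n us"], auto)
  have trP: "Re (mtrace P) = (\<Sum>k<n. max (lam k) 0)" unfolding P_def fc_trace[OF len usc on] by simp
  have trM: "Re (mtrace M) = (\<Sum>k<n. max (- lam k) 0)" unfolding M_def fc_trace[OF len usc on] by simp
  have e1': "(\<Sum>k<n. max (lam k) 0 - max (- lam k) 0) = (\<Sum>k<n. lam k)"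
    by (rule sum.cong, auto)
  have e1: "(\<Sum>k<n. max (lam k) 0) - (\<Sum>k<n. max (- lam k) 0) = (\<Sum>k<n. lam k)"
    using e1' by (simp add: sum_subtractf)
  have e2': "(\<Sum>k<n. max (lam k) 0 + max (- lam k) 0) = (\<Sum>k<n. \<bar>lam k\<bar>)"
    by (rule sum.cong, auto)
  have e2: "(\<Sum>k<n. max (lam k) 0) + (\<Sum>k<n. max (- lam k) 0) = (\<Sum>k<n. \<bar>lam k\<bar>)"
    using e2' by (simp add: sum.distrib)
  have pP: "psd P" unfolding P_def by (rule fc_psd[OF len usc], simp)
  have pM: "psd M" unfolding M_def by (rule fc_psd[OF len usc], simp)
  have t1: "Re (mtrace P) = trace_dist_norm D" using trP e1 e2 sl tdn by linarith
  have t2: "Re (mtrace M) = trace_dist_norm D" using trM e1 e2 sl tdn by linarith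
  have cP: "P \<in> carrier_mat n n" and cM: "M \<in> carrier_mat n n" unfolding P_def M_def by simp_all
  show ?thesis using cP cM pP pM PM t1 t2 by blast
qed


definition eta :: "real \<Rightarrow> real" where
  "eta t = (if t \<le> 0 then 0 else - t * ln t)"

lemma eta_nonneg_le: "t \<le> 1 \<Longrightarrow> eta t \<ge> 0"
  unfolding eta_def by (auto simp: mult_nonneg_nonpos ln_le_zero_iff)

lemma eta_le_one: "eta t \<le> 1"
proof (cases "t \<le> 0")
  case False
  hence t: "t > 0" by simp
  have "ln (1/t) \<le> 1/t - 1" using t by (intro ln_le_minus_one, simp)
  hence "- ln t \<le> 1/t - 1" using t by (simp add: ln_div)
  hence "t * (- ln t) \<le> t * (1/t - 1)" using t by (intro mult_left_mono, auto)
  also have "\<dots> \<le> 1" using t by (simp add: field_simps)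
  finally show ?thesis unfolding eta_def using t by simp
qed (simp add: eta_def)

lemma eta_add_le:
  assumes a: "a \<ge> 0" and b: "b \<ge> 0"
  shows "eta (a + b) \<le> eta a + eta b"
proof (cases "a = 0 \<or> b = 0")
  case True then show ?thesis using a b by (auto simp: eta_def)
next
  case False
  hence a': "a > 0" and b': "b > 0" using a b by auto
  have "ln a \<le> ln (a+b)" "ln b \<le> ln (a+b)" using a' b' by auto
  hence l: "a * ln a \<le> a * ln (a+b)" "b * ln b \<le> b * ln (a+b)" using a' b' by (auto intro: mult_left_mono)
  have e: "eta (a+b) = - (a * ln (a+b)) - b * ln (a+b)" unfolding eta_def using a' b'
    by (simp add: algebra_simps)
  have "eta a = - (a * ln a)" "eta b = - (b * ln b)" unfolding eta_def using a' b' by auto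
  then show ?thesis using e l by linarith
qed

lemma eta_add_ge:
  assumes a: "a \<ge> 0" and b: "b \<ge> 0" and ab: "a + b \<le> 2"
  shows "eta (a + b) \<ge> eta a - b * (1 + ln 2)"
proof (cases "b = 0")
  case True then show ?thesis by simp
next
  case False
  hence b': "b > 0" using b by simp
  have l2: "ln (a + b) \<le> ln 2" using ab b' a by simp
  show ?thesis
  proof (cases "a = 0")
    case True
    have "ln b \<le> ln 2" using l2 True by simp
    hence "ln b \<le> 1 + ln 2" by linarith
    hence "b * ln b \<le> b * (1 + ln 2)" using b' by (intro mult_left_mono, auto)
    moreover have "eta (a + b) = - (b * ln b)" unfolding eta_def using True b' by simp
    moreover have "eta a = 0" using True by (simp add: eta_def)
    ultimately show ?thesis by linarith
  next
    case False
    hence a': "a > 0" using a by simp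
    have "ln ((a+b)/a) \<le> (a+b)/a - 1" using a' b' by (intro ln_le_minus_one, simp add: add_pos_pos)
    hence "ln (a+b) - ln a \<le> b / a" using a' b' by (simp add: ln_div field_simps add_pos_pos)
    hence "a * (ln (a+b) - ln a) \<le> a * (b / a)" using a' by (intro mult_left_mono, auto)
    hence t1: "a * ln (a+b) - a * ln a \<le> b" using a' by (simp add: algebra_simps)
    have t2: "b * ln (a+b) \<le> b * ln 2" using l2 b' by (intro mult_left_mono, auto)
    have "eta (a+b) = - a * ln (a+b) - b * ln (a+b)" unfolding eta_def using a' b'
      by (simp add: algebra_simps)
    moreover have "eta a = - a * ln a" unfolding eta_def using a' by simp
    ultimately show ?thesis using t1 t2 by (simp add: algebra_simps)
  qed
qed

lemma gibbs:
  assumes fin: "finite F" and r: "\<forall>b\<in>F. r b \<ge> 0"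
  shows "eta (\<Sum>b\<in>F. r b) \<le> (\<Sum>b\<in>F. eta (r b))"
    and "(\<Sum>b\<in>F. eta (r b)) \<le> eta (\<Sum>b\<in>F. r b) + (\<Sum>b\<in>F. r b) * ln (card F)"
proof -
  define s where "s = (\<Sum>b\<in>F. r b)"
  have s0: "s \<ge> 0" unfolding s_def using r by (simp add: sum_nonneg)
  have rb_le: "\<And>b. b \<in> F \<Longrightarrow> r b \<le> s" unfolding s_def using r fin
    by (intro member_le_sum, auto)
  show "eta (\<Sum>b\<in>F. r b) \<le> (\<Sum>b\<in>F. eta (r b))"
  proof (cases "s = 0")
    case True
    hence "\<forall>b\<in>F. r b = 0" using rb_le r by force
    then show ?thesis by (simp add: eta_def)
  next
    case False
    hence spos: "s > 0" using s0 by simp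
    have "\<And>b. b \<in> F \<Longrightarrow> eta (r b) \<ge> - r b * ln s"
    proof -
      fix b assume b: "b \<in> F"
      show "eta (r b) \<ge> - r b * ln s"
      proof (cases "r b = 0")
        case True then show ?thesis by (simp add: eta_def)
      next
        case False
        hence "r b > 0" using r b by force
        moreover have "ln (r b) \<le> ln s" using calculation rb_le[OF b] by simp
        ultimately show ?thesis unfolding eta_def by (simp add: mult_left_mono)
      qed
    qed
    hence "(\<Sum>b\<in>F. eta (r b)) \<ge> (\<Sum>b\<in>F. - r b * ln s)" by (rule sum_mono)
    also have "(\<Sum>b\<in>F. - r b * ln s) = eta s" unfolding eta_def s_def using spos s_def
      by (simp add: sum_distrib_right sum_negf)
    finally show ?thesis unfolding s_def by simp
  qed
  show "(\<Sum>b\<in>F. eta (r b)) \<le> eta (\<Sum>b\<in>F. r b) + (\<Sum>b\<in>F. r b) * ln (card F)"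
  proof (cases "s = 0")
    case True
    hence "\<forall>b\<in>F. r b = 0" using rb_le r by force
    then show ?thesis using True unfolding s_def by (simp add: eta_def)
  next
    case False
    hence spos: "s > 0" using s0 by simp
    hence Fne: "F \<noteq> {}" unfolding s_def by auto
    define K where "K = real (card F)"
    have Kpos: "K > 0" unfolding K_def using fin Fne by (simp add: card_gt_0_iff)
    define t where "t = (\<lambda>b. if r b \<le> 0 then 0 else r b * ln (s / (K * r b)))"
    have tle: "\<And>b. b \<in> F \<Longrightarrow> t b \<le> s / K - r b"
    proof -
      fix b assume b: "b \<in> F"
      show "t b \<le> s / K - r b"
      proof (cases "r b \<le> 0")
        case True
        have "0 \<le> s / K" using Kpos spos by simp
        then show ?thesis unfolding t_def using True by simp
      next
        case False
        hence rb: "r b > 0" by simp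
        have "ln (s / (K * r b)) \<le> s / (K * r b) - 1" using rb Kpos spos by (intro ln_le_minus_one, simp)
        hence "r b * ln (s / (K * r b)) \<le> r b * (s / (K * r b) - 1)" using rb by (intro mult_left_mono, auto)
        also have "\<dots> = s / K - r b" using rb Kpos by (simp add: field_simps)
        finally show ?thesis unfolding t_def using rb by simp
      qed
    qed
    have "(\<Sum>b\<in>F. t b) \<le> (\<Sum>b\<in>F. s / K - r b)" by (rule sum_mono, rule tle)
    also have "\<dots> = 0" using Kpos unfolding K_def s_def by (simp add: sum_subtractf)
    finally have st: "(\<Sum>b\<in>F. t b) \<le> 0" .
    have teq: "\<And>b. b \<in> F \<Longrightarrow> t b = eta (r b) + r b * ln s - r b * ln K"
    proof -
      fix b assume b: "b \<in> F"
      show "t b = eta (r b) + r b * ln s - r b * ln K"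
      proof (cases "r b \<le> 0")
        case True then have "r b = 0" using r b by force
        then show ?thesis unfolding t_def eta_def by simp
      next
        case False
        hence rb: "r b > 0" by simp
        have "ln (s / (K * r b)) = ln s - ln K - ln (r b)" using rb Kpos spos
          by (simp add: ln_div ln_mult)
        hence "t b = r b * (ln s - ln K - ln (r b))" unfolding t_def using rb by simp
        moreover have "eta (r b) = - (r b * ln (r b))" unfolding eta_def using rb by simp
        ultimately show ?thesis by (simp add: algebra_simps)
      qed
    qed
    have "(\<Sum>b\<in>F. t b) = (\<Sum>b\<in>F. eta (r b) + r b * ln s - r b * ln K)"
      using teq by (intro sum.cong) auto
    also have "\<dots> = (\<Sum>b\<in>F. eta (r b)) + (\<Sum>b\<in>F. r b) * ln s - (\<Sum>b\<in>F. r b) * ln K"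
      by (simp add: sum.distrib sum_subtractf sum_distrib_right)
    finally have "(\<Sum>b\<in>F. t b) = (\<Sum>b\<in>F. eta (r b)) + s * ln s - s * ln K"
      unfolding s_def .
    hence "(\<Sum>b\<in>F. eta (r b)) \<le> - s * ln s + s * ln K" using st by simp
    then show ?thesis unfolding eta_def s_def[symmetric] K_def using spos by simp
  qed
qed


definition Hs :: "'a set \<Rightarrow> ('a \<Rightarrow> real) \<Rightarrow> real" where
  "Hs S f = (\<Sum>s\<in>S. eta (f s))"

definition MI :: "'a set \<Rightarrow> 'b set \<Rightarrow> ('a \<Rightarrow> 'b \<Rightarrow> real) \<Rightarrow> real" where
  "MI A B P = Hs A (\<lambda>a. \<Sum>b\<in>B. P a b) + Hs B (\<lambda>b. \<Sum>a\<in>A. P a b) - (\<Sum>a\<in>A. Hs B (P a))"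

lemma fiber_bound:
  assumes B: "finite B" and B2: "finite B2" and g: "g ` B \<subseteq> B2"
    and K: "\<forall>b2\<in>B2. card {b\<in>B. g b = b2} \<le> K" and K1: "K \<ge> 1"
    and f: "\<forall>b\<in>B. f b \<ge> 0"
  shows "0 \<le> Hs B f - Hs B2 (\<lambda>b2. \<Sum>b\<in>{b\<in>B. g b = b2}. f b)"
    and "Hs B f - Hs B2 (\<lambda>b2. \<Sum>b\<in>{b\<in>B. g b = b2}. f b) \<le> (\<Sum>b\<in>B. f b) * ln K"
proof -
  have grp: "\<And>h. (\<Sum>b2\<in>B2. \<Sum>b\<in>{b\<in>B. g b = b2}. h b) = (\<Sum>b\<in>B. h b)"
    by (rule sum.group[OF B B2 g])
  have HB: "Hs B f = (\<Sum>b2\<in>B2. \<Sum>b\<in>{b\<in>B. g b = b2}. eta (f b))"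
    unfolding Hs_def using grp[of "\<lambda>b. eta (f b)"] by simp
  have fin: "\<And>b2. finite {b\<in>B. g b = b2}" using B by simp
  have fpos: "\<And>b2. \<forall>b\<in>{b\<in>B. g b = b2}. f b \<ge> 0" using f by auto
  have lo: "\<And>b2. eta (\<Sum>b\<in>{b\<in>B. g b = b2}. f b) \<le> (\<Sum>b\<in>{b\<in>B. g b = b2}. eta (f b))"
    using gibbs(1)[OF fin fpos] by blast
  have hi: "\<And>b2. b2 \<in> B2 \<Longrightarrow> (\<Sum>b\<in>{b\<in>B. g b = b2}. eta (f b)) \<le>
      eta (\<Sum>b\<in>{b\<in>B. g b = b2}. f b) + (\<Sum>b\<in>{b\<in>B. g b = b2}. f b) * ln K"
  proof -
    fix b2 assume b2: "b2 \<in> B2"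
    let ?F = "{b\<in>B. g b = b2}"
    have g1: "(\<Sum>b\<in>?F. eta (f b)) \<le> eta (\<Sum>b\<in>?F. f b) + (\<Sum>b\<in>?F. f b) * ln (card ?F)"
      using gibbs(2)[OF fin fpos] by blast
    have sp: "(\<Sum>b\<in>?F. f b) \<ge> 0" using fpos[of b2] by (intro sum_nonneg, blast)
    have "(\<Sum>b\<in>?F. f b) * ln (card ?F) \<le> (\<Sum>b\<in>?F. f b) * ln K"
    proof (cases "card ?F = 0")
      case True
      hence "?F = {}" using fin by simp
      hence "(\<Sum>b\<in>?F. f b) = 0" by (simp only: sum.empty)
      then show ?thesis by simp
    next
      case False
      hence "ln (card ?F) \<le> ln K" using K b2 K1 by simp
      then show ?thesis using sp by (intro mult_left_mono)
    qed
    then show "(\<Sum>b\<in>?F. eta (f b)) \<le> eta (\<Sum>b\<in>?F. f b) + (\<Sum>b\<in>?F. f b) * ln K"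
      using g1 by simp
  qed
  have "Hs B2 (\<lambda>b2. \<Sum>b\<in>{b\<in>B. g b = b2}. f b) \<le> Hs B f"
    unfolding HB unfolding Hs_def by (rule sum_mono, rule lo)
  then show "0 \<le> Hs B f - Hs B2 (\<lambda>b2. \<Sum>b\<in>{b\<in>B. g b = b2}. f b)" by simp
  have "Hs B f \<le> (\<Sum>b2\<in>B2. eta (\<Sum>b\<in>{b\<in>B. g b = b2}. f b) + (\<Sum>b\<in>{b\<in>B. g b = b2}. f b) * ln K)"
    unfolding HB by (rule sum_mono, rule hi)
  also have "\<dots> = Hs B2 (\<lambda>b2. \<Sum>b\<in>{b\<in>B. g b = b2}. f b) + (\<Sum>b\<in>B. f b) * ln K"
    unfolding Hs_def sum.distrib sum_distrib_right[symmetric] grp ..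
  finally show "Hs B f - Hs B2 (\<lambda>b2. \<Sum>b\<in>{b\<in>B. g b = b2}. f b) \<le> (\<Sum>b\<in>B. f b) * ln K" by simp
qed

lemma MI_marginal:
  assumes A: "finite A" and B: "finite B" and B2: "finite B2" and g: "g ` B \<subseteq> B2"
    and K: "\<forall>b2\<in>B2. card {b\<in>B. g b = b2} \<le> K" and K1: "K \<ge> 1"
    and P: "\<forall>a\<in>A. \<forall>b\<in>B. P a b \<ge> 0"
  shows "\<bar>MI A B P - MI A B2 (\<lambda>a b2. \<Sum>b\<in>{b\<in>B. g b = b2}. P a b)\<bar> \<le> (\<Sum>a\<in>A. \<Sum>b\<in>B. P a b) * ln K"
proof -
  let ?P' = "\<lambda>a b2. \<Sum>b\<in>{b\<in>B. g b = b2}. P a b"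
  have grp: "\<And>h. (\<Sum>b2\<in>B2. \<Sum>b\<in>{b\<in>B. g b = b2}. h b) = (\<Sum>b\<in>B. h b)"
    by (rule sum.group[OF B B2 g])
  have mA: "(\<lambda>a. \<Sum>b2\<in>B2. ?P' a b2) = (\<lambda>a. \<Sum>b\<in>B. P a b)"
    by (rule ext, rule grp)
  have mB: "(\<lambda>b2. \<Sum>a\<in>A. ?P' a b2) = (\<lambda>b2. \<Sum>b\<in>{b\<in>B. g b = b2}. \<Sum>a\<in>A. P a b)"
    by (rule ext, rule sum.swap)
  have PB: "\<forall>b\<in>B. (\<Sum>a\<in>A. P a b) \<ge> 0" using P by (simp add: sum_nonneg)
  note fB = fiber_bound[OF B B2 g K K1 PB]
  have fJ: "\<And>a. a \<in> A \<Longrightarrow> 0 \<le> Hs B (P a) - Hs B2 (?P' a) \<and> Hs B (P a) - Hs B2 (?P' a) \<le> (\<Sum>b\<in>B. P a b) * ln K"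
    using fiber_bound[OF B B2 g K K1] P by blast
  have J1: "0 \<le> (\<Sum>a\<in>A. Hs B (P a)) - (\<Sum>a\<in>A. Hs B2 (?P' a))"
    using fJ by (simp add: sum_subtractf[symmetric] sum_nonneg)
  have "(\<Sum>a\<in>A. Hs B (P a)) - (\<Sum>a\<in>A. Hs B2 (?P' a)) \<le> (\<Sum>a\<in>A. (\<Sum>b\<in>B. P a b) * ln K)"
    unfolding sum_subtractf[symmetric] using fJ by (intro sum_mono, blast)
  hence J2: "(\<Sum>a\<in>A. Hs B (P a)) - (\<Sum>a\<in>A. Hs B2 (?P' a)) \<le> (\<Sum>a\<in>A. \<Sum>b\<in>B. P a b) * ln K"
    by (simp add: sum_distrib_right)
  have mass: "(\<Sum>b\<in>B. \<Sum>a\<in>A. P a b) = (\<Sum>a\<in>A. \<Sum>b\<in>B. P a b)" by (rule sum.swap)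
  have "MI A B P - MI A B2 ?P' = (Hs B (\<lambda>b. \<Sum>a\<in>A. P a b) - Hs B2 (\<lambda>b2. \<Sum>b\<in>{b\<in>B. g b = b2}. \<Sum>a\<in>A. P a b))
      - ((\<Sum>a\<in>A. Hs B (P a)) - (\<Sum>a\<in>A. Hs B2 (?P' a)))"
    unfolding MI_def mA mB by simp
  then show ?thesis using fB J1 J2 mass by (simp add: abs_le_iff)
qed


lemma pert_H:
  assumes S: "finite S" and u: "\<forall>s\<in>S. u s \<ge> 0" and v: "\<forall>s\<in>S. v s \<ge> 0"
    and uv: "\<forall>s\<in>S. u s + v s \<le> 2"
  shows "Hs S u - (1 + ln 2) * (\<Sum>s\<in>S. v s) \<le> Hs S (\<lambda>s. u s + v s)"
    and "Hs S (\<lambda>s. u s + v s) \<le> Hs S u + Hs S v"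
proof -
  have "(\<Sum>s\<in>S. eta (u s) - v s * (1 + ln 2)) \<le> (\<Sum>s\<in>S. eta (u s + v s))"
    using u v uv by (intro sum_mono eta_add_ge) auto
  then show "Hs S u - (1 + ln 2) * (\<Sum>s\<in>S. v s) \<le> Hs S (\<lambda>s. u s + v s)"
    unfolding Hs_def by (simp add: sum_subtractf sum_distrib_right sum_distrib_left ac_simps)
  have "(\<Sum>s\<in>S. eta (u s + v s)) \<le> (\<Sum>s\<in>S. eta (u s) + eta (v s))"
    using u v by (intro sum_mono eta_add_le) auto
  then show "Hs S (\<lambda>s. u s + v s) \<le> Hs S u + Hs S v"
    unfolding Hs_def by (simp add: sum.distrib)
qed

lemma MI_perturb:
  assumes A: "finite A" "A \<noteq> {}" and B: "finite B" "B \<noteq> {}"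
    and P: "\<forall>a\<in>A. \<forall>b\<in>B. P a b \<ge> 0" and E: "\<forall>a\<in>A. \<forall>b\<in>B. E a b \<ge> 0"
    and mP: "(\<Sum>a\<in>A. \<Sum>b\<in>B. P a b) = 1" and mE: "(\<Sum>a\<in>A. \<Sum>b\<in>B. E a b) = T" and T1: "T \<le> 1"
  shows "\<bar>MI A B (\<lambda>a b. P a b + E a b) - MI A B P\<bar> \<le>
    2 * (1 + ln 2) * T + 2 * eta T + T * (ln (card A) + ln (card B))"
proof -
  define c where "c = 1 + ln (2::real)"
  define R where "R = (\<lambda>a b. P a b + E a b)"
  have R: "\<forall>a\<in>A. \<forall>b\<in>B. R a b \<ge> 0" unfolding R_def using P E by (simp add: add_nonneg_nonneg)
  have mR: "(\<Sum>a\<in>A. \<Sum>b\<in>B. R a b) = 1 + T" unfolding R_def using mP mE by (simp add: sum.distrib)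
  have T0: "T \<ge> 0" using mE E by (metis sum_nonneg)
  have RA_le: "\<And>a. a \<in> A \<Longrightarrow> (\<Sum>b\<in>B. R a b) \<le> 2"
  proof -
    fix a assume a: "a \<in> A"
    have "(\<Sum>b\<in>B. R a b) \<le> (\<Sum>a\<in>A. \<Sum>b\<in>B. R a b)"
      using A R a by (intro member_le_sum, auto intro: sum_nonneg)
    then show "(\<Sum>b\<in>B. R a b) \<le> 2" using mR T1 by simp
  qed
  have RB_le: "\<And>b. b \<in> B \<Longrightarrow> (\<Sum>a\<in>A. R a b) \<le> 2"
  proof -
    fix b assume b: "b \<in> B"
    have "(\<Sum>a\<in>A. R a b) \<le> (\<Sum>b\<in>B. \<Sum>a\<in>A. R a b)"
      using B R b by (intro member_le_sum, auto intro: sum_nonneg)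
    also have "\<dots> = (\<Sum>a\<in>A. \<Sum>b\<in>B. R a b)" by (rule sum.swap)
    finally show "(\<Sum>a\<in>A. R a b) \<le> 2" using mR T1 by simp
  qed
  have R_le: "\<And>a b. a \<in> A \<Longrightarrow> b \<in> B \<Longrightarrow> R a b \<le> 2"
  proof -
    fix a b assume a: "a \<in> A" and b: "b \<in> B"
    have "R a b \<le> (\<Sum>b\<in>B. R a b)" using B R a b by (intro member_le_sum, auto)
    then show "R a b \<le> 2" using RA_le[OF a] by simp
  qed
  define PA where "PA = (\<lambda>a. \<Sum>b\<in>B. P a b)"
  define EA where "EA = (\<lambda>a. \<Sum>b\<in>B. E a b)"
  define PB where "PB = (\<lambda>b. \<Sum>a\<in>A. P a b)"
  define EB where "EB = (\<lambda>b. \<Sum>a\<in>A. E a b)"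
  have PAn: "\<forall>a\<in>A. PA a \<ge> 0" unfolding PA_def using P by (simp add: sum_nonneg)
  have EAn: "\<forall>a\<in>A. EA a \<ge> 0" unfolding EA_def using E by (simp add: sum_nonneg)
  have PBn: "\<forall>b\<in>B. PB b \<ge> 0" unfolding PB_def using P by (simp add: sum_nonneg)
  have EBn: "\<forall>b\<in>B. EB b \<ge> 0" unfolding EB_def using E by (simp add: sum_nonneg)
  have RA: "(\<lambda>a. \<Sum>b\<in>B. R a b) = (\<lambda>a. PA a + EA a)" unfolding R_def PA_def EA_def by (simp add: sum.distrib)
  have RB: "(\<lambda>b. \<Sum>a\<in>A. R a b) = (\<lambda>b. PB b + EB b)" unfolding R_def PB_def EB_def by (simp add: sum.distrib)
  have sEA: "(\<Sum>a\<in>A. EA a) = T" unfolding EA_def using mE .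
  have sEB: "(\<Sum>b\<in>B. EB b) = T" unfolding EB_def using mE by (simp add: sum.swap[of _ B A])
  have le2A: "\<forall>a\<in>A. PA a + EA a \<le> 2" using RA_le RA by metis
  have le2B: "\<forall>b\<in>B. PB b + EB b \<le> 2" using RB_le RB by metis
  note hA = pert_H[OF A(1) PAn EAn le2A]
  note hB = pert_H[OF B(1) PBn EBn le2B]
  have gA: "Hs A EA \<le> eta T + T * ln (card A)"
    using gibbs(2)[OF A(1) EAn] sEA unfolding Hs_def by simp
  have gB: "Hs B EB \<le> eta T + T * ln (card B)"
    using gibbs(2)[OF B(1) EBn] sEB unfolding Hs_def by simp
  have jlo: "\<And>a. a \<in> A \<Longrightarrow> Hs B (P a) - c * EA a \<le> Hs B (R a)"
    unfolding R_def EA_def c_def using pert_H(1)[OF B(1)] P E R_le unfolding R_def by blast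
  have jhi: "\<And>a. a \<in> A \<Longrightarrow> Hs B (R a) \<le> Hs B (P a) + Hs B (E a)"
    unfolding R_def using pert_H(2)[OF B(1)] P E R_le unfolding R_def by blast
  have jE: "\<And>a. a \<in> A \<Longrightarrow> Hs B (E a) \<le> eta (EA a) + EA a * ln (card B)"
    unfolding EA_def Hs_def using gibbs(2)[OF B(1)] E by blast
  have J1: "(\<Sum>a\<in>A. Hs B (P a)) - c * T \<le> (\<Sum>a\<in>A. Hs B (R a))"
  proof -
    have "(\<Sum>a\<in>A. Hs B (P a) - c * EA a) \<le> (\<Sum>a\<in>A. Hs B (R a))" by (rule sum_mono, rule jlo)
    moreover have "(\<Sum>a\<in>A. c * EA a) = c * T" using sEA by (simp add: sum_distrib_left[symmetric])
    ultimately show ?thesis by (simp add: sum_subtractf)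
  qed
  have J2: "(\<Sum>a\<in>A. Hs B (R a)) \<le> (\<Sum>a\<in>A. Hs B (P a)) + (eta T + T * ln (card A) + T * ln (card B))"
  proof -
    have "(\<Sum>a\<in>A. Hs B (R a)) \<le> (\<Sum>a\<in>A. Hs B (P a) + (eta (EA a) + EA a * ln (card B)))"
      using jhi jE by (intro sum_mono, fastforce)
    also have "\<dots> = (\<Sum>a\<in>A. Hs B (P a)) + Hs A EA + T * ln (card B)"
      using sEA unfolding Hs_def by (simp add: sum.distrib sum_distrib_right[symmetric])
    finally show ?thesis using gA by simp
  qed
  have MIR: "MI A B R = Hs A (\<lambda>a. PA a + EA a) + Hs B (\<lambda>b. PB b + EB b) - (\<Sum>a\<in>A. Hs B (R a))"
    unfolding MI_def RA RB ..
  have MIP: "MI A B P = Hs A PA + Hs B PB - (\<Sum>a\<in>A. Hs B (P a))"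
    unfolding MI_def PA_def PB_def ..
  have ln2: "ln (2::real) \<ge> 0" by simp
  have lA: "ln (card A) \<ge> 0" using A by (simp add: Suc_le_eq card_gt_0_iff)
  have lB: "ln (card B) \<ge> 0" using B by (simp add: Suc_le_eq card_gt_0_iff)
  have eT: "eta T \<ge> 0" using T1 by (rule eta_nonneg_le)
  have cT: "c * T \<ge> 0" unfolding c_def using T0 ln2 by simp
  have tA: "T * ln (card A) \<ge> 0" "T * ln (card B) \<ge> 0" using T0 lA lB by simp_all
  show ?thesis unfolding R_def[symmetric] MIR MIP abs_le_iff
    using hA hB gA gB J1 J2 sEA sEB cT eT tA unfolding c_def by (auto simp: algebra_simps)
qed


lemma fin_len: "finite {ys :: 'y::finite list. length ys = n}"
proof -
  have "{ys :: 'y list. length ys = n} = {ys. set ys \<subseteq> UNIV \<and> length ys = n}" by simp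
  then show ?thesis using finite_lists_length_eq[OF finite_UNIV, of n] by simp
qed

lemma card_len: "card {ys :: 'y::finite list. length ys = n} = card (UNIV :: 'y set) ^ n"
proof -
  have "{ys :: 'y list. length ys = n} = {ys. set ys \<subseteq> UNIV \<and> length ys = n}" by simp
  then show ?thesis using card_lists_length_eq[OF finite_UNIV, of n] by simp
qed

lemma sum_len_Suc:
  "(\<Sum>ys\<in>{ys :: 'y::finite list. length ys = Suc n}. f ys) = (\<Sum>y\<in>UNIV. \<Sum>ys\<in>{ys. length ys = n}. f (y # ys))"
proof -
  have im: "{ys :: 'y list. length ys = Suc n} = (\<lambda>(y, ys). y # ys) ` (UNIV \<times> {ys. length ys = n})"
    by (auto simp: length_Suc_conv image_iff)
  have inj: "inj_on (\<lambda>(y, ys). y # ys) (UNIV \<times> {ys :: 'y list. length ys = n})"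
    by (auto simp: inj_on_def)
  have "(\<Sum>ys\<in>{ys :: 'y list. length ys = Suc n}. f ys) = (\<Sum>p\<in>UNIV \<times> {ys. length ys = n}. f ((\<lambda>(y, ys). y # ys) p))"
    unfolding im by (subst sum.reindex[OF inj], simp add: comp_def)
  also have "\<dots> = (\<Sum>y\<in>UNIV. \<Sum>ys\<in>{ys. length ys = n}. f (y # ys))"
  proof -
    have "(\<Sum>y\<in>UNIV. \<Sum>ys\<in>{ys. length ys = n}. f (y # ys)) = (\<Sum>(y, ys)\<in>UNIV \<times> {ys. length ys = n}. f (y # ys))"
      by (rule sum.cartesian_product)
    then show ?thesis by (simp add: case_prod_unfold)
  qed
  finally show ?thesis .
qed

lemma block_apply_1:
  assumes A: "A \<in> carrier_mat d d" and PA: "\<Phi> A \<in> carrier_mat d d"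
  shows "block_apply 1 d \<Phi> A = \<Phi> A"
proof -
  have inner: "mat d d (\<lambda>(a, b). A $$ (0 * d + a, 0 * d + b)) = A"
    using A by (intro eq_matI, auto)
  show ?thesis
  proof (rule eq_matI)
    fix i j assume i: "i < dim_row (\<Phi> A)" and j: "j < dim_col (\<Phi> A)"
    hence i': "i < d" and j': "j < d" using PA by auto
    have "block_apply 1 d \<Phi> A $$ (i,j) = \<Phi> (mat d d (\<lambda>(a, b). A $$ ((i div d) * d + a, (j div d) * d + b))) $$ (i mod d, j mod d)"
      unfolding block_apply_def using i' j' by simp
    also have "\<dots> = \<Phi> A $$ (i, j)" using i' j' inner by simp
    finally show "block_apply 1 d \<Phi> A $$ (i,j) = \<Phi> A $$ (i,j)" .
  qed (use PA in \<open>auto simp: block_apply_def\<close>)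
qed

lemma cp_carrier: "completely_positive d \<Phi> \<Longrightarrow> A \<in> carrier_mat d d \<Longrightarrow> \<Phi> A \<in> carrier_mat d d"
  unfolding completely_positive_def by blast

lemma cp_psd:
  assumes cp: "completely_positive d \<Phi>" and A: "A \<in> carrier_mat d d" and p: "psd A"
  shows "psd (\<Phi> A)"
proof -
  have A1: "A \<in> carrier_mat (1 * d) (1 * d)" using A by simp
  have "psd (block_apply 1 d \<Phi> A)" using cp A1 p unfolding completely_positive_def by blast
  then show ?thesis using block_apply_1[of A d \<Phi>] A cp_carrier[OF cp A] by simp
qed

lemma cp_add: "completely_positive d \<Phi> \<Longrightarrow> A \<in> carrier_mat d d \<Longrightarrow> B \<in> carrier_mat d d \<Longrightarrow>
  \<Phi> (A + B) = \<Phi> A + \<Phi> B"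
  unfolding completely_positive_def by blast

lemma cp_smult: "completely_positive d \<Phi> \<Longrightarrow> A \<in> carrier_mat d d \<Longrightarrow> \<Phi> (c \<cdot>\<^sub>m A) = c \<cdot>\<^sub>m \<Phi> A"
  unfolding completely_positive_def by blast

lemma cp_minus:
  assumes cp: "completely_positive d \<Phi>" and A: "A \<in> carrier_mat d d" and B: "B \<in> carrier_mat d d"
  shows "\<Phi> (A - B) = \<Phi> A - \<Phi> B"
proof -
  have "A - B = A + ((-1) \<cdot>\<^sub>m B)" using A B by (intro eq_matI, auto)
  hence "\<Phi> (A - B) = \<Phi> A + (-1) \<cdot>\<^sub>m \<Phi> B" using cp_add[OF cp A] cp_smult[OF cp B] B by simp
  also have "\<dots> = \<Phi> A - \<Phi> B" using cp_carrier[OF cp A] cp_carrier[OF cp B] by (intro eq_matI, auto)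
  finally show ?thesis .
qed

lemma cp_zero:
  assumes cp: "completely_positive d \<Phi>"
  shows "\<Phi> (0\<^sub>m d d) = 0\<^sub>m d d"
proof -
  have z: "(0\<^sub>m d d :: complex mat) \<in> carrier_mat d d" by simp
  have zz: "(0\<^sub>m d d :: complex mat) - 0\<^sub>m d d = 0\<^sub>m d d" by (intro eq_matI, auto)
  have "\<Phi> (0\<^sub>m d d) = \<Phi> (0\<^sub>m d d - 0\<^sub>m d d)" unfolding zz ..
  also have "\<dots> = \<Phi> (0\<^sub>m d d) - \<Phi> (0\<^sub>m d d)" by (rule cp_minus[OF cp z z])
  also have "\<dots> = 0\<^sub>m d d" using cp_carrier[OF cp z] by (intro eq_matI, auto)
  finally show ?thesis .
qed

lemma apply_seq_Nil[simp]: "apply_seq N [] ys \<rho> = \<rho>" "apply_seq N xs [] \<rho> = \<rho>"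
  unfolding apply_seq_def by auto

lemma apply_seq_Cons[simp]: "apply_seq N (x # xs) (y # ys) \<rho> = apply_seq N xs ys (N x y \<rho>)"
  unfolding apply_seq_def by simp

lemma apply_seq_append:
  assumes "length xs1 = length ys1"
  shows "apply_seq N (xs1 @ xs2) (ys1 @ ys2) \<rho> = apply_seq N xs2 ys2 (apply_seq N xs1 ys1 \<rho>)"
  unfolding apply_seq_def using assms by (simp add: zip_append)

lemma apply_seq_props:
  assumes cp: "\<forall>x y. completely_positive d (N x y)"
  shows "\<rho> \<in> carrier_mat d d \<Longrightarrow> apply_seq N xs ys \<rho> \<in> carrier_mat d d"
    and "\<rho> \<in> carrier_mat d d \<Longrightarrow> psd \<rho> \<Longrightarrow> psd (apply_seq N xs ys \<rho>)"
    and "A \<in> carrier_mat d d \<Longrightarrow> B \<in> carrier_mat d d \<Longrightarrow>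
         apply_seq N xs ys (A + B) = apply_seq N xs ys A + apply_seq N xs ys B"
    and "A \<in> carrier_mat d d \<Longrightarrow> B \<in> carrier_mat d d \<Longrightarrow>
         apply_seq N xs ys (A - B) = apply_seq N xs ys A - apply_seq N xs ys B"
    and "apply_seq N xs ys (0\<^sub>m d d) = 0\<^sub>m d d"
proof (induction xs arbitrary: ys \<rho> A B)
  case Nil
  { case 1 then show ?case by simp }
  { case 2 then show ?case by simp }
  { case 3 then show ?case by simp }
  { case 4 then show ?case by simp }
  { case 5 then show ?case by simp }
next
  case (Cons x xs)
  { case 1 then show ?case
      by (cases ys, auto intro!: Cons.IH(1) cp_carrier[OF cp[rule_format]]) }
  { case 2 then show ?case
      by (cases ys, auto intro!: Cons.IH(2) cp_carrier[OF cp[rule_format]] cp_psd[OF cp[rule_format]]) }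
  { case 3 then show ?case
    proof (cases ys)
      case (Cons y ys')
      have "N x y (A + B) = N x y A + N x y B" using cp_add[OF cp[rule_format] 3(1,2)] .
      then show ?thesis using Cons 3 Cons.IH(3) cp_carrier[OF cp[rule_format]] by simp
    qed simp }
  { case 4 then show ?case
    proof (cases ys)
      case (Cons y ys')
      have "N x y (A - B) = N x y A - N x y B" using cp_minus[OF cp[rule_format] 4(1,2)] .
      then show ?thesis using Cons 4 Cons.IH(4) cp_carrier[OF cp[rule_format]] by simp
    qed simp }
  { case 5 then show ?case
      by (cases ys, auto simp: cp_zero[OF cp[rule_format]] Cons.IH(5)) }
qed

lemma msum_carrier[simp]: "msum d f S \<in> carrier_mat d d"
  unfolding msum_def by simp

lemma msum_empty: "msum d f {} = 0\<^sub>m d d"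
  unfolding msum_def by (intro eq_matI, auto)

lemma msum_insert:
  assumes "finite S" "s \<notin> S" "f s \<in> carrier_mat d d"
  shows "msum d f (insert s S) = f s + msum d f S"
  using assms unfolding msum_def by (intro eq_matI, auto)

lemma mtrace_msum:
  assumes "\<forall>s\<in>S. f s \<in> carrier_mat d d"
  shows "mtrace (msum d f S) = (\<Sum>s\<in>S. mtrace (f s))"
proof -
  have "mtrace (msum d f S) = (\<Sum>i<d. \<Sum>s\<in>S. f s $$ (i,i))" unfolding mtrace_def msum_def by simp
  also have "\<dots> = (\<Sum>s\<in>S. \<Sum>i<d. f s $$ (i,i))" by (rule sum.swap)
  also have "\<dots> = (\<Sum>s\<in>S. mtrace (f s))" unfolding mtrace_def using assms by (intro sum.cong, auto)
  finally show ?thesis .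
qed

lemma lin_msum:
  assumes add: "\<And>A B. A \<in> carrier_mat d d \<Longrightarrow> B \<in> carrier_mat d d \<Longrightarrow> \<Phi> (A + B) = \<Phi> A + \<Phi> B"
    and car: "\<And>A. A \<in> carrier_mat d d \<Longrightarrow> \<Phi> A \<in> carrier_mat d d"
    and zero: "\<Phi> (0\<^sub>m d d) = 0\<^sub>m d d"
    and fin: "finite S" and f: "\<forall>s\<in>S. f s \<in> carrier_mat d d"
  shows "\<Phi> (msum d f S) = msum d (\<lambda>s. \<Phi> (f s)) S"
  using fin f
proof (induction S rule: finite_induct)
  case empty
  then show ?case using zero by (simp add: msum_empty)
next
  case (insert s S)
  have "\<Phi> (msum d f (insert s S)) = \<Phi> (f s + msum d f S)" using insert by (simp add: msum_insert)
  also have "\<dots> = \<Phi> (f s) + \<Phi> (msum d f S)" using insert add by simp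
  also have "\<dots> = msum d (\<lambda>s. \<Phi> (f s)) (insert s S)" using insert car by (simp add: msum_insert)
  finally show ?case .
qed

lemma tp_step:
  assumes cq: "cc_qsc d N" and r: "\<rho> \<in> carrier_mat d d"
  shows "(\<Sum>y\<in>UNIV. mtrace (N x y \<rho>)) = mtrace \<rho>"
proof -
  have cp: "\<forall>x y. completely_positive d (N x y)" using cq unfolding cc_qsc_def by blast
  have "mtrace (msum d (\<lambda>y. N x y \<rho>) UNIV) = mtrace \<rho>" using cq r unfolding cc_qsc_def by blast
  moreover have "mtrace (msum d (\<lambda>y. N x y \<rho>) UNIV) = (\<Sum>y\<in>UNIV. mtrace (N x y \<rho>))"
    using cp_carrier[OF cp[rule_format] r] by (intro mtrace_msum, auto)
  ultimately show ?thesis by simp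
qed

lemma tp_seq:
  assumes cq: "cc_qsc d N" and r: "\<rho> \<in> carrier_mat d d"
  shows "(\<Sum>ys\<in>{ys. length ys = length xs}. mtrace (apply_seq N xs ys \<rho>)) = mtrace \<rho>"
  using r
proof (induction xs arbitrary: \<rho>)
  case Nil
  have "{ys :: 'b list. length ys = 0} = {[]}" by auto
  then show ?case by simp
next
  case (Cons x xs)
  have cp: "\<forall>x y. completely_positive d (N x y)" using cq unfolding cc_qsc_def by blast
  have "(\<Sum>ys\<in>{ys. length ys = length (x # xs)}. mtrace (apply_seq N (x # xs) ys \<rho>))
     = (\<Sum>y\<in>UNIV. \<Sum>ys\<in>{ys. length ys = length xs}. mtrace (apply_seq N xs ys (N x y \<rho>)))"
    by (simp add: sum_len_Suc)
  also have "\<dots> = (\<Sum>y\<in>UNIV. mtrace (N x y \<rho>))"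
    using Cons.IH cp_carrier[OF cp[rule_format] Cons.prems] by simp
  also have "\<dots> = mtrace \<rho>" by (rule tp_step[OF cq Cons.prems])
  finally show ?case .
qed


lemma psd_trace_nonneg:
  fixes A :: "complex mat"
  assumes A: "A \<in> carrier_mat n n" and p: "psd A"
  shows "Re (mtrace A) \<ge> 0"
proof -
  have q: "\<And>v. v \<in> carrier_vec n \<Longrightarrow> 0 \<le> Re (conjugate v \<bullet> (A *\<^sub>v v))"
    using p A unfolding psd_def by auto
  have diag: "Re (A $$ (i,i)) \<ge> 0" if i: "i < n" for i
  proof -
    define v where "v = (unit_vec n i :: complex vec)"
    have v: "v \<in> carrier_vec n" unfolding v_def by simp
    have Av: "(A *\<^sub>v v) $ i = A $$ (i,i)"
    proof -
      have "(A *\<^sub>v v) $ i = (\<Sum>j<n. A $$ (i,j) * v $ j)" using mv_index[of i A v] A v i by simp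
      also have "\<dots> = (\<Sum>j<n. if j = i then A $$ (i,j) else 0)"
        unfolding v_def using i by (intro sum.cong, auto)
      also have "\<dots> = A $$ (i,i)" using i by (simp add: sum.delta)
      finally show ?thesis .
    qed
    have "conjugate v \<bullet> (A *\<^sub>v v) = (\<Sum>k<n. cnj (v $ k) * (A *\<^sub>v v) $ k)"
      using v A by (simp add: cip)
    also have "\<dots> = (\<Sum>k<n. if k = i then (A *\<^sub>v v) $ k else 0)"
      unfolding v_def using i by (intro sum.cong, auto)
    also have "\<dots> = A $$ (i,i)" using i Av by (simp add: sum.delta)
    finally show ?thesis using q[OF v] by simp
  qed
  have "Re (mtrace A) = (\<Sum>i<n. Re (A $$ (i,i)))" unfolding mtrace_def using A by simp
  also have "\<dots> \<ge> 0" using diag by (intro sum_nonneg, auto)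
  finally show ?thesis .
qed

lemma mtrace_add:
  fixes A B :: "complex mat"
  shows "A \<in> carrier_mat n n \<Longrightarrow> B \<in> carrier_mat n n \<Longrightarrow> mtrace (A + B) = mtrace A + mtrace B"
  unfolding mtrace_def by (simp add: sum.distrib)

lemma mtrace_minus:
  fixes A B :: "complex mat"
  shows "A \<in> carrier_mat n n \<Longrightarrow> B \<in> carrier_mat n n \<Longrightarrow> mtrace (A - B) = mtrace A - mtrace B"
  unfolding mtrace_def by (simp add: sum_subtractf)

lemma herm_iff:
  fixes A :: "complex mat"
  assumes A: "A \<in> carrier_mat n n"
  shows "mat_adjoint A = A \<longleftrightarrow> (\<forall>i<n. \<forall>j<n. A $$ (i,j) = cnj (A $$ (j,i)))"
proof
  assume "mat_adjoint A = A"
  then show "\<forall>i<n. \<forall>j<n. A $$ (i,j) = cnj (A $$ (j,i))" using herm_entry[OF A] by blast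
next
  assume h: "\<forall>i<n. \<forall>j<n. A $$ (i,j) = cnj (A $$ (j,i))"
  show "mat_adjoint A = A"
  proof (rule eq_matI)
    fix i j assume i: "i < dim_row A" and j: "j < dim_col A"
    have "mat_adjoint A $$ (i,j) = cnj (A $$ (j,i))" using A i j by simp
    then show "mat_adjoint A $$ (i,j) = A $$ (i,j)" using h[rule_format, of i j] A i j by simp
  qed (use A in auto)
qed

lemma msum_herm:
  assumes "\<forall>s\<in>S. f s \<in> carrier_mat d d \<and> mat_adjoint (f s) = f s"
  shows "mat_adjoint (msum d f S) = msum d f S"
proof -
  have c: "\<And>i j s. i < d \<Longrightarrow> j < d \<Longrightarrow> s \<in> S \<Longrightarrow> cnj (f s $$ (j,i)) = f s $$ (i,j)"
    using assms herm_entry by metis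
  show ?thesis unfolding herm_iff[OF msum_carrier]
  proof (intro allI impI)
    fix i j assume i: "i < d" and j: "j < d"
    have "cnj (msum d f S $$ (j,i)) = (\<Sum>s\<in>S. cnj (f s $$ (j,i)))" unfolding msum_def using i j by simp
    also have "\<dots> = (\<Sum>s\<in>S. f s $$ (i,j))" using c i j by (intro sum.cong refl, simp)
    also have "\<dots> = msum d f S $$ (i,j)" unfolding msum_def using i j by simp
    finally show "msum d f S $$ (i,j) = cnj (msum d f S $$ (j,i))" by simp
  qed
qed

lemma herm_minus:
  fixes A B :: "complex mat"
  assumes A: "A \<in> carrier_mat n n" and B: "B \<in> carrier_mat n n"
    and hA: "mat_adjoint A = A" and hB: "mat_adjoint B = B"
  shows "mat_adjoint (A - B) = A - B"
proof -
  have cA: "\<And>i j. i < n \<Longrightarrow> j < n \<Longrightarrow> cnj (A $$ (j,i)) = A $$ (i,j)" using herm_entry[OF A hA] by metis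
  have cB: "\<And>i j. i < n \<Longrightarrow> j < n \<Longrightarrow> cnj (B $$ (j,i)) = B $$ (i,j)" using herm_entry[OF B hB] by metis
  show ?thesis unfolding herm_iff[of "A - B" n, OF minus_carrier_mat[OF B]]
  proof (intro allI impI)
    fix i j assume i: "i < n" and j: "j < n"
    show "(A - B) $$ (i,j) = cnj ((A - B) $$ (j,i))" using A B i j cA[OF i j] cB[OF i j] by simp
  qed
qed

lemma MI_cong:
  assumes eq: "\<forall>a\<in>A. \<forall>b\<in>B. P a b = P' a b"
  shows "MI A B P = MI A B P'"
proof -
  have e1: "Hs A (\<lambda>a. \<Sum>b\<in>B. P a b) = Hs A (\<lambda>a. \<Sum>b\<in>B. P' a b)"
    unfolding Hs_def using eq by (intro sum.cong refl arg_cong[where f=eta], simp)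
  have e2: "Hs B (\<lambda>b. \<Sum>a\<in>A. P a b) = Hs B (\<lambda>b. \<Sum>a\<in>A. P' a b)"
    unfolding Hs_def using eq by (intro sum.cong refl arg_cong[where f=eta], simp)
  have e3: "(\<Sum>a\<in>A. Hs B (P a)) = (\<Sum>a\<in>A. Hs B (P' a))"
    unfolding Hs_def using eq by (intro sum.cong refl arg_cong[where f=eta], simp)
  show ?thesis unfolding MI_def e1 e2 e3 ..
qed

lemma xlnx: "x \<ge> 0 \<Longrightarrow> x * ln x = - eta x"
  unfolding eta_def by auto

lemma MI_formula:
  assumes A: "finite A" and B: "finite B" and P: "\<forall>a\<in>A. \<forall>b\<in>B. P a b \<ge> 0"
  shows "(\<Sum>a\<in>A. \<Sum>b\<in>B. if P a b = 0 then 0 else P a b * log 2 (P a b / ((\<Sum>b'\<in>B. P a b') * (\<Sum>a'\<in>A. P a' b))))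
    = MI A B P / ln 2"
proof -
  define PA where "PA = (\<lambda>a. \<Sum>b'\<in>B. P a b')"
  define PB where "PB = (\<lambda>b. \<Sum>a'\<in>A. P a' b)"
  have tm: "(if P a b = 0 then 0 else P a b * log 2 (P a b / (PA a * PB b)))
      = (- eta (P a b) - P a b * ln (PA a) - P a b * ln (PB b)) / ln 2" if a: "a \<in> A" and b: "b \<in> B" for a b
  proof (cases "P a b = 0")
    case True then show ?thesis by (simp add: eta_def)
  next
    case False
    hence pos: "P a b > 0" using P a b by force
    have "P a b \<le> PA a" unfolding PA_def using P a b B by (intro member_le_sum, auto)
    hence pa: "PA a > 0" using pos by simp
    have "P a b \<le> PB b" unfolding PB_def using P a b A by (intro member_le_sum, auto)
    hence pb: "PB b > 0" using pos by simp
    have L: "log 2 (P a b / (PA a * PB b)) = (ln (P a b) - ln (PA a) - ln (PB b)) / ln 2"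
      using pos pa pb by (simp add: log_def ln_div ln_mult)
    have "(- eta (P a b) - P a b * ln (PA a) - P a b * ln (PB b)) = P a b * (ln (P a b) - ln (PA a) - ln (PB b))"
      using pos by (simp add: eta_def algebra_simps)
    then show ?thesis using False L by simp
  qed
  have "(\<Sum>a\<in>A. \<Sum>b\<in>B. if P a b = 0 then 0 else P a b * log 2 (P a b / (PA a * PB b)))
     = (\<Sum>a\<in>A. \<Sum>b\<in>B. (- eta (P a b) - P a b * ln (PA a) - P a b * ln (PB b)) / ln 2)"
    using tm by (intro sum.cong refl, auto)
  also have "\<dots> = ((\<Sum>a\<in>A. \<Sum>b\<in>B. - eta (P a b)) - (\<Sum>a\<in>A. \<Sum>b\<in>B. P a b * ln (PA a))
      - (\<Sum>a\<in>A. \<Sum>b\<in>B. P a b * ln (PB b))) / ln 2"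
    by (simp add: sum_divide_distrib[symmetric] sum_subtractf)
  also have "(\<Sum>a\<in>A. \<Sum>b\<in>B. P a b * ln (PA a)) = - Hs A PA"
  proof -
    have "(\<Sum>a\<in>A. \<Sum>b\<in>B. P a b * ln (PA a)) = (\<Sum>a\<in>A. PA a * ln (PA a))"
      unfolding PA_def by (simp add: sum_distrib_right)
    also have "\<dots> = (\<Sum>a\<in>A. - eta (PA a))"
      using P by (intro sum.cong refl xlnx, simp add: PA_def sum_nonneg)
    finally show ?thesis unfolding Hs_def by (simp add: sum_negf)
  qed
  also have "(\<Sum>a\<in>A. \<Sum>b\<in>B. P a b * ln (PB b)) = - Hs B PB"
  proof -
    have "(\<Sum>a\<in>A. \<Sum>b\<in>B. P a b * ln (PB b)) = (\<Sum>b\<in>B. \<Sum>a\<in>A. P a b * ln (PB b))" by (rule sum.swap)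
    also have "\<dots> = (\<Sum>b\<in>B. PB b * ln (PB b))"
      unfolding PB_def by (simp add: sum_distrib_right)
    also have "\<dots> = (\<Sum>b\<in>B. - eta (PB b))"
      using P by (intro sum.cong refl xlnx, simp add: PB_def sum_nonneg)
    finally show ?thesis unfolding Hs_def by (simp add: sum_negf)
  qed
  also have "(\<Sum>a\<in>A. \<Sum>b\<in>B. - eta (P a b)) = - (\<Sum>a\<in>A. Hs B (P a))"
    unfolding Hs_def by (simp add: sum_negf)
  finally show ?thesis unfolding MI_def PA_def PB_def by simp
qed


lemma Qp_nonneg: "\<forall>x. 0 \<le> Q x \<Longrightarrow> (\<Prod>x\<leftarrow>xs. Q x) \<ge> (0::real)"
  by (induction xs, auto)

lemma Qp_sum:
  fixes Q :: "'x::finite \<Rightarrow> real"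
  assumes "(\<Sum>x\<in>UNIV. Q x) = 1"
  shows "(\<Sum>xs\<in>{xs :: 'x list. length xs = n}. \<Prod>x\<leftarrow>xs. Q x) = 1"
proof (induction n)
  case 0
  have "{xs :: 'x list. length xs = 0} = {[]}" by auto
  then show ?case by simp
next
  case (Suc n)
  have "(\<Sum>xs\<in>{xs :: 'x list. length xs = Suc n}. \<Prod>x\<leftarrow>xs. Q x)
      = (\<Sum>x\<in>UNIV. \<Sum>xs\<in>{xs. length xs = n}. Q x * (\<Prod>x\<leftarrow>xs. Q x))"
    by (simp add: sum_len_Suc)
  also have "\<dots> = (\<Sum>x\<in>UNIV. Q x)" using Suc by (simp add: sum_distrib_left[symmetric])
  finally show ?case using assms by simp
qed

lemma Lf_nonneg:
  assumes cq: "cc_qsc d N" and s: "\<sigma> \<in> carrier_mat d d" and p: "psd \<sigma>"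
  shows "Re (mtrace (apply_seq N xs ys \<sigma>)) \<ge> 0"
proof -
  have cp: "\<forall>x y. completely_positive d (N x y)" using cq unfolding cc_qsc_def by blast
  show ?thesis using psd_trace_nonneg[OF apply_seq_props(1)[OF cp s] apply_seq_props(2)[OF cp s p]] .
qed

lemma Lf_sum:
  assumes cq: "cc_qsc d N" and s: "\<sigma> \<in> carrier_mat d d"
  shows "(\<Sum>ys\<in>{ys. length ys = length xs}. Re (mtrace (apply_seq N xs ys \<sigma>))) = Re (mtrace \<sigma>)"
  using tp_seq[OF cq s, of xs] by (simp flip: Re_sum)

lemma out_state_carrier: "out_state d N xs \<rho> \<in> carrier_mat d d"
  unfolding out_state_def by simp

lemma out_state_trace:
  assumes cq: "cc_qsc d N" and r: "\<rho> \<in> carrier_mat d d"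
  shows "mtrace (out_state d N xs \<rho>) = mtrace \<rho>"
proof -
  have cp: "\<forall>x y. completely_positive d (N x y)" using cq unfolding cc_qsc_def by blast
  show ?thesis unfolding out_state_def
    using mtrace_msum[of "{ys. length ys = length xs}" "\<lambda>ys. apply_seq N xs ys \<rho>" d]
      apply_seq_props(1)[OF cp r] tp_seq[OF cq r] by simp
qed

lemma out_state_herm:
  assumes cq: "cc_qsc d N" and r: "\<rho> \<in> carrier_mat d d" and p: "psd \<rho>"
  shows "mat_adjoint (out_state d N xs \<rho>) = out_state d N xs \<rho>"
proof -
  have cp: "\<forall>x y. completely_positive d (N x y)" using cq unfolding cc_qsc_def by blast
  show ?thesis unfolding out_state_def
    by (rule msum_herm, use apply_seq_props(1,2)[OF cp r] p psd_def in auto)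
qed

lemma marg_eq:
  assumes cq: "cc_qsc d N" and r: "\<rho> \<in> carrier_mat d d" and k: "k \<le> length xs"
  shows "(\<Sum>y1\<in>{y1. length y1 = k}. Re (mtrace (apply_seq N xs (y1 @ ys2) \<rho>)))
    = Re (mtrace (apply_seq N (drop k xs) ys2 (out_state d N (take k xs) \<rho>)))"
proof -
  have cp: "\<forall>x y. completely_positive d (N x y)" using cq unfolding cc_qsc_def by blast
  let ?\<Phi> = "apply_seq N (drop k xs) ys2"
  let ?S = "{y1 :: 'b list. length y1 = k}"
  have lt: "length (take k xs) = k" using k by simp
  have split: "\<And>y1. y1 \<in> ?S \<Longrightarrow> apply_seq N xs (y1 @ ys2) \<rho> = ?\<Phi> (apply_seq N (take k xs) y1 \<rho>)"
  proof -
    fix y1 assume "y1 \<in> ?S"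
    hence "length (take k xs) = length y1" using lt by simp
    then show "apply_seq N xs (y1 @ ys2) \<rho> = ?\<Phi> (apply_seq N (take k xs) y1 \<rho>)"
      using apply_seq_append[of "take k xs" y1 N "drop k xs" ys2 \<rho>] by simp
  qed
  have car: "\<forall>y1\<in>?S. apply_seq N (take k xs) y1 \<rho> \<in> carrier_mat d d" using apply_seq_props(1)[OF cp r] by simp
  have lin: "?\<Phi> (msum d (\<lambda>y1. apply_seq N (take k xs) y1 \<rho>) ?S) = msum d (\<lambda>y1. ?\<Phi> (apply_seq N (take k xs) y1 \<rho>)) ?S"
    by (rule lin_msum[OF apply_seq_props(3)[OF cp] apply_seq_props(1)[OF cp] apply_seq_props(5)[OF cp] fin_len car])
  have "(\<Sum>y1\<in>?S. Re (mtrace (apply_seq N xs (y1 @ ys2) \<rho>))) = Re (\<Sum>y1\<in>?S. mtrace (?\<Phi> (apply_seq N (take k xs) y1 \<rho>)))"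
    using split by (simp add: Re_sum)
  also have "(\<Sum>y1\<in>?S. mtrace (?\<Phi> (apply_seq N (take k xs) y1 \<rho>))) = mtrace (msum d (\<lambda>y1. ?\<Phi> (apply_seq N (take k xs) y1 \<rho>)) ?S)"
    using apply_seq_props(1)[OF cp] car by (intro mtrace_msum[symmetric], auto)
  also have "\<dots> = mtrace (?\<Phi> (out_state d N (take k xs) \<rho>))"
    unfolding lin[symmetric] out_state_def lt ..
  finally show ?thesis .
qed

lemma fiber_eq:
  assumes k: "k \<le> n" and y2: "length ys2 = n - k"
  shows "{ys \<in> {ys :: 'y list. length ys = n}. drop k ys = ys2} = (\<lambda>y1. y1 @ ys2) ` {y1. length y1 = k}"
proof (intro equalityI subsetI)
  fix ys assume "ys \<in> {ys \<in> {ys :: 'y list. length ys = n}. drop k ys = ys2}"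
  hence "length ys = n" "drop k ys = ys2" by auto
  then show "ys \<in> (\<lambda>y1. y1 @ ys2) ` {y1. length y1 = k}"
    using k by (intro image_eqI[of _ _ "take k ys"], auto)
next
  fix ys assume "ys \<in> (\<lambda>y1. y1 @ ys2) ` {y1. length y1 = k}"
  then show "ys \<in> {ys \<in> {ys :: 'y list. length ys = n}. drop k ys = ys2}" using k y2 by auto
qed

lemma fiber_sum:
  assumes k: "k \<le> n" and y2: "length ys2 = n - k"
  shows "(\<Sum>ys\<in>{ys \<in> {ys :: 'y list. length ys = n}. drop k ys = ys2}. f ys) = (\<Sum>y1\<in>{y1. length y1 = k}. f (y1 @ ys2))"
  unfolding fiber_eq[OF k y2] by (subst sum.reindex, auto simp: inj_on_def)

lemma fiber_card:
  assumes k: "k \<le> n" and y2: "length ys2 = n - k"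
  shows "card {ys \<in> {ys :: 'y::finite list. length ys = n}. drop k ys = ys2} \<le> card (UNIV :: 'y set) ^ k"
  unfolding fiber_eq[OF k y2] card_len[symmetric] by (rule card_image_le[OF fin_len])


lemma main_bound:
  fixes N :: "'x::finite \<Rightarrow> 'y::finite \<Rightarrow> complex mat \<Rightarrow> complex mat"
    and Q :: "'x \<Rightarrow> real"
  assumes cq: "cc_qsc d N" and Qn: "\<forall>x. 0 \<le> Q x" and Q1: "(\<Sum>x\<in>UNIV. Q x) = 1"
    and da: "density d \<alpha>" and db: "density d \<beta>"
    and kn: "k \<le> n" and eps: "0 < \<epsilon>" "\<epsilon> \<le> 1"
    and tdk: "\<forall>xs1 :: 'x list. length xs1 = k \<longrightarrow> trace_dist_norm (out_state d N xs1 \<alpha> - out_state d N xs1 \<beta>) < \<epsilon>"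
  shows "\<bar>mutual_info_n Q N \<alpha> n - mutual_info_n Q N \<beta> n\<bar> \<le>
    (2 * real k * ln (card (UNIV :: 'y set)) + 4 * (1 + ln 2) + 4
      + 2 * \<epsilon> * real n * (ln (card (UNIV :: 'x set)) + ln (card (UNIV :: 'y set)))) / ln 2"
proof -
  have cp: "\<forall>x y. completely_positive d (N x y)" using cq unfolding cc_qsc_def by blast
  have ac: "\<alpha> \<in> carrier_mat d d" "psd \<alpha>" "mtrace \<alpha> = 1" using da unfolding density_def by auto
  have bc: "\<beta> \<in> carrier_mat d d" "psd \<beta>" "mtrace \<beta> = 1" using db unfolding density_def by auto
  define Xs where "Xs = {xs :: 'x list. length xs = n}"
  define Ys where "Ys = {ys :: 'y list. length ys = n}"
  define Y2 where "Y2 = {ys :: 'y list. length ys = n - k}"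
  define Qp where "Qp = (\<lambda>xs :: 'x list. \<Prod>x\<leftarrow>xs. Q x)"
  define cX where "cX = card (UNIV :: 'x set)"
  define cY where "cY = card (UNIV :: 'y set)"
  have cX0: "cX > 0" and cY0: "cY > 0" unfolding cX_def cY_def by (simp_all add: finite_UNIV_card_ge_0)
  have fX: "finite Xs" and fY: "finite Ys" and fY2: "finite Y2" unfolding Xs_def Ys_def Y2_def by (simp_all add: fin_len)
  have neX: "Xs \<noteq> {}" unfolding Xs_def by (auto intro!: exI[of _ "replicate n undefined"])
  have neY2: "Y2 \<noteq> {}" unfolding Y2_def by (auto intro!: exI[of _ "replicate (n - k) undefined"])
  have Qpn: "\<And>xs. Qp xs \<ge> 0" unfolding Qp_def using Qn by (rule Qp_nonneg)
  have Qps: "(\<Sum>xs\<in>Xs. Qp xs) = 1" unfolding Xs_def Qp_def using Qp_sum[OF Q1] .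
  define P2 where "P2 = (\<lambda>\<rho> (xs :: 'x list) (ys2 :: 'y list). Qp xs * Re (mtrace (apply_seq N (drop k xs) ys2 (out_state d N (take k xs) \<rho>))))"
  have jp: "joint_pmf Q N \<rho> = (\<lambda>xs ys. Qp xs * Re (mtrace (apply_seq N xs ys \<rho>)))" for \<rho>
    unfolding joint_pmf_def Qp_def by (intro ext, simp)
  have stage1: "\<bar>MI Xs Ys (joint_pmf Q N \<rho>) - MI Xs Y2 (P2 \<rho>)\<bar> \<le> k * ln cY
      \<and> (\<forall>xs\<in>Xs. \<forall>ys2\<in>Y2. P2 \<rho> xs ys2 \<ge> 0) \<and> (\<Sum>xs\<in>Xs. \<Sum>ys2\<in>Y2. P2 \<rho> xs ys2) = 1
      \<and> (\<forall>xs\<in>Xs. \<forall>ys\<in>Ys. joint_pmf Q N \<rho> xs ys \<ge> 0)"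
    if r: "\<rho> \<in> carrier_mat d d" "psd \<rho>" "mtrace \<rho> = 1" for \<rho>
  proof -
    let ?P = "joint_pmf Q N \<rho>"
    have Pn: "\<forall>xs\<in>Xs. \<forall>ys\<in>Ys. ?P xs ys \<ge> 0"
      unfolding jp using Qpn Lf_nonneg[OF cq r(1,2)] by simp
    have fib: "(\<Sum>ys\<in>{ys\<in>Ys. drop k ys = ys2}. ?P xs ys) = P2 \<rho> xs ys2" if xs: "xs \<in> Xs" and y2: "ys2 \<in> Y2" for xs ys2
    proof -
      have lx: "length xs = n" and ly: "length ys2 = n - k" using xs y2 unfolding Xs_def Y2_def by auto
      have "(\<Sum>ys\<in>{ys\<in>Ys. drop k ys = ys2}. ?P xs ys) = (\<Sum>y1\<in>{y1. length y1 = k}. ?P xs (y1 @ ys2))"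
        unfolding Ys_def by (rule fiber_sum[OF kn ly])
      also have "\<dots> = Qp xs * (\<Sum>y1\<in>{y1. length y1 = k}. Re (mtrace (apply_seq N xs (y1 @ ys2) \<rho>)))"
        unfolding jp by (simp add: sum_distrib_left)
      also have "\<dots> = P2 \<rho> xs ys2" unfolding P2_def using marg_eq[OF cq r(1), of k xs ys2] kn lx by simp
      finally show ?thesis .
    qed
    have P2n: "\<forall>xs\<in>Xs. \<forall>ys2\<in>Y2. P2 \<rho> xs ys2 \<ge> 0"
    proof (intro ballI)
      fix xs ys2 assume xs: "xs \<in> Xs" and y2: "ys2 \<in> Y2"
      have "(\<Sum>ys\<in>{ys\<in>Ys. drop k ys = ys2}. ?P xs ys) \<ge> 0" using Pn xs by (intro sum_nonneg, auto)
      then show "P2 \<rho> xs ys2 \<ge> 0" using fib[OF xs y2] by simp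
    qed
    have g: "drop k ` Ys \<subseteq> Y2" unfolding Ys_def Y2_def by auto
    have K: "\<forall>b2\<in>Y2. card {b\<in>Ys. drop k b = b2} \<le> cY ^ k"
      unfolding Ys_def Y2_def cY_def using fiber_card[OF kn] by auto
    have K1: "cY ^ k \<ge> 1" using cY0 by (simp add: Suc_le_eq)
    have mass: "(\<Sum>xs\<in>Xs. \<Sum>ys\<in>Ys. ?P xs ys) = 1"
    proof -
      have "(\<Sum>xs\<in>Xs. \<Sum>ys\<in>Ys. ?P xs ys) = (\<Sum>xs\<in>Xs. Qp xs * Re (mtrace \<rho>))"
      proof (rule sum.cong, simp)
        fix xs assume "xs \<in> Xs"
        hence "Ys = {ys. length ys = length xs}" unfolding Xs_def Ys_def by simp
        then show "(\<Sum>ys\<in>Ys. ?P xs ys) = Qp xs * Re (mtrace \<rho>)"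
          unfolding jp using Lf_sum[OF cq r(1), of xs] by (simp add: sum_distrib_left[symmetric])
      qed
      also have "\<dots> = 1" using r(3) Qps by simp
      finally show ?thesis .
    qed
    have mm: "\<bar>MI Xs Ys ?P - MI Xs Y2 (\<lambda>a b2. \<Sum>b\<in>{b\<in>Ys. drop k b = b2}. ?P a b)\<bar> \<le> 1 * ln (real (cY ^ k))"
      using MI_marginal[OF fX fY fY2 g K K1 Pn] unfolding mass .
    have "MI Xs Y2 (\<lambda>a b2. \<Sum>b\<in>{b\<in>Ys. drop k b = b2}. ?P a b) = MI Xs Y2 (P2 \<rho>)"
      by (rule MI_cong, use fib in auto)
    moreover have "ln (real (cY ^ k)) = k * ln cY" using cY0 by (simp add: ln_realpow)
    ultimately have s1: "\<bar>MI Xs Ys ?P - MI Xs Y2 (P2 \<rho>)\<bar> \<le> k * ln cY" using mm by simp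
    have m2: "(\<Sum>xs\<in>Xs. \<Sum>ys2\<in>Y2. P2 \<rho> xs ys2) = 1"
    proof -
      have "(\<Sum>xs\<in>Xs. \<Sum>ys2\<in>Y2. P2 \<rho> xs ys2) = (\<Sum>xs\<in>Xs. \<Sum>ys2\<in>Y2. \<Sum>ys\<in>{ys\<in>Ys. drop k ys = ys2}. ?P xs ys)"
        using fib by (intro sum.cong refl, auto)
      also have "\<dots> = (\<Sum>xs\<in>Xs. \<Sum>ys\<in>Ys. ?P xs ys)"
        by (intro sum.cong refl sum.group[OF fY fY2 g])
      finally show ?thesis using mass by simp
    qed
    show ?thesis using s1 P2n m2 Pn by blast
  qed
  note sA = stage1[OF ac]
  note sB = stage1[OF bc]
  define D where "D = (\<lambda>xs1 :: 'x list. out_state d N xs1 \<alpha> - out_state d N xs1 \<beta>)"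
  have dec: "\<forall>xs1. \<exists>Pp Pm. Pp \<in> carrier_mat d d \<and> Pm \<in> carrier_mat d d \<and> psd Pp \<and> psd Pm \<and> D xs1 = Pp - Pm \<and>
      Re (mtrace Pp) = trace_dist_norm (D xs1) \<and> Re (mtrace Pm) = trace_dist_norm (D xs1)"
  proof
    fix xs1 :: "'x list"
    have Dc: "D xs1 \<in> carrier_mat d d" unfolding D_def using out_state_carrier
      by (metis minus_carrier_mat)
    have Dh: "mat_adjoint (D xs1) = D xs1" unfolding D_def
      by (rule herm_minus[OF out_state_carrier out_state_carrier out_state_herm[OF cq ac(1,2)] out_state_herm[OF cq bc(1,2)]])
    have Dt: "mtrace (D xs1) = 0"
    proof -
      have "mtrace (D xs1) = mtrace (out_state d N xs1 \<alpha>) - mtrace (out_state d N xs1 \<beta>)"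
        unfolding D_def by (rule mtrace_minus[OF out_state_carrier out_state_carrier])
      then show ?thesis using out_state_trace[OF cq ac(1)] out_state_trace[OF cq bc(1)] ac(3) bc(3) by simp
    qed
    show "\<exists>Pp Pm. Pp \<in> carrier_mat d d \<and> Pm \<in> carrier_mat d d \<and> psd Pp \<and> psd Pm \<and> D xs1 = Pp - Pm \<and>
      Re (mtrace Pp) = trace_dist_norm (D xs1) \<and> Re (mtrace Pm) = trace_dist_norm (D xs1)"
      by (rule herm_decomp[OF Dc Dh Dt])
  qed
  obtain Pp where "\<forall>xs1. \<exists>Pm. Pp xs1 \<in> carrier_mat d d \<and> Pm \<in> carrier_mat d d \<and> psd (Pp xs1) \<and> psd Pm \<and> D xs1 = Pp xs1 - Pm \<and>
      Re (mtrace (Pp xs1)) = trace_dist_norm (D xs1) \<and> Re (mtrace Pm) = trace_dist_norm (D xs1)"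
    using choice[OF dec] by blast
  from choice[OF this] obtain Pm where PPm: "\<forall>xs1. Pp xs1 \<in> carrier_mat d d \<and> Pm xs1 \<in> carrier_mat d d \<and> psd (Pp xs1) \<and> psd (Pm xs1) \<and> D xs1 = Pp xs1 - Pm xs1 \<and>
      Re (mtrace (Pp xs1)) = trace_dist_norm (D xs1) \<and> Re (mtrace (Pm xs1)) = trace_dist_norm (D xs1)"
    by blast
  define T where "T = (\<Sum>xs\<in>Xs. Qp xs * trace_dist_norm (D (take k xs)))"
  define E where "E = (\<lambda>xs ys2. Qp xs * Re (mtrace (apply_seq N (drop k xs) ys2 (Pm (take k xs)))))"
  define F where "F = (\<lambda>xs ys2. Qp xs * Re (mtrace (apply_seq N (drop k xs) ys2 (Pp (take k xs)))))"
  have En: "\<forall>xs\<in>Xs. \<forall>ys2\<in>Y2. E xs ys2 \<ge> 0" unfolding E_def using Qpn Lf_nonneg[OF cq] PPm by simp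
  have Fn: "\<forall>xs\<in>Xs. \<forall>ys2\<in>Y2. F xs ys2 \<ge> 0" unfolding F_def using Qpn Lf_nonneg[OF cq] PPm by simp
  have Y2x: "\<And>xs. xs \<in> Xs \<Longrightarrow> Y2 = {ys. length ys = length (drop k xs)}" unfolding Xs_def Y2_def by simp
  have mE: "(\<Sum>xs\<in>Xs. \<Sum>ys2\<in>Y2. E xs ys2) = T" unfolding T_def
  proof (rule sum.cong, simp)
    fix xs assume xs: "xs \<in> Xs"
    show "(\<Sum>ys2\<in>Y2. E xs ys2) = Qp xs * trace_dist_norm (D (take k xs))"
      unfolding E_def Y2x[OF xs] using Lf_sum[OF cq, of "Pm (take k xs)" "drop k xs"] PPm
      by (simp add: sum_distrib_left[symmetric])
  qed
  have mF: "(\<Sum>xs\<in>Xs. \<Sum>ys2\<in>Y2. F xs ys2) = T" unfolding T_def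
  proof (rule sum.cong, simp)
    fix xs assume xs: "xs \<in> Xs"
    show "(\<Sum>ys2\<in>Y2. F xs ys2) = Qp xs * trace_dist_norm (D (take k xs))"
      unfolding F_def Y2x[OF xs] using Lf_sum[OF cq, of "Pp (take k xs)" "drop k xs"] PPm
      by (simp add: sum_distrib_left[symmetric])
  qed
  have T0: "T \<ge> 0" using mE En by (metis sum_nonneg)
  have Teps: "T \<le> \<epsilon>"
  proof -
    have "T \<le> (\<Sum>xs\<in>Xs. Qp xs * \<epsilon>)" unfolding T_def
    proof (rule sum_mono)
      fix xs assume xs: "xs \<in> Xs"
      hence "length (take k xs) = k" using kn unfolding Xs_def by simp
      hence "trace_dist_norm (D (take k xs)) < \<epsilon>" using tdk unfolding D_def by blast
      then show "Qp xs * trace_dist_norm (D (take k xs)) \<le> Qp xs * \<epsilon>" using Qpn[of xs]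
        by (intro mult_left_mono, auto)
    qed
    also have "\<dots> = \<epsilon>" using Qps by (simp add: sum_distrib_right[symmetric])
    finally show ?thesis .
  qed
  have T1: "T \<le> 1" using Teps eps by simp
  have eqn: "(\<lambda>a b. P2 \<alpha> a b + E a b) = (\<lambda>a b. P2 \<beta> a b + F a b)"
  proof (intro ext)
    fix xs :: "'x list" and ys2 :: "'y list"
    let ?t = "take k xs"
    let ?\<Phi> = "apply_seq N (drop k xs) ys2"
    have ca: "out_state d N ?t \<alpha> \<in> carrier_mat d d" and cb: "out_state d N ?t \<beta> \<in> carrier_mat d d"
      by (rule out_state_carrier)+
    have cpp: "Pp ?t \<in> carrier_mat d d" and cpm: "Pm ?t \<in> carrier_mat d d" using PPm by auto
    have Deq: "out_state d N ?t \<alpha> - out_state d N ?t \<beta> = Pp ?t - Pm ?t" using PPm unfolding D_def by auto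
    have meq: "out_state d N ?t \<alpha> + Pm ?t = out_state d N ?t \<beta> + Pp ?t"
    proof (rule eq_matI)
      fix i j assume i: "i < dim_row (out_state d N ?t \<beta> + Pp ?t)" and j: "j < dim_col (out_state d N ?t \<beta> + Pp ?t)"
      hence i': "i < d" and j': "j < d" using cb cpp by auto
      have "(out_state d N ?t \<alpha> - out_state d N ?t \<beta>) $$ (i,j) = (Pp ?t - Pm ?t) $$ (i,j)" using Deq by simp
      hence "out_state d N ?t \<alpha> $$ (i,j) - out_state d N ?t \<beta> $$ (i,j) = Pp ?t $$ (i,j) - Pm ?t $$ (i,j)"
        using i' j' ca cb cpp cpm by simp
      hence "out_state d N ?t \<alpha> $$ (i,j) + Pm ?t $$ (i,j) = out_state d N ?t \<beta> $$ (i,j) + Pp ?t $$ (i,j)"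
        by (simp add: algebra_simps eq_diff_eq diff_eq_eq)
      then show "(out_state d N ?t \<alpha> + Pm ?t) $$ (i,j) = (out_state d N ?t \<beta> + Pp ?t) $$ (i,j)"
        using i' j' ca cb cpp cpm by simp
    qed (use ca cb cpp cpm in auto)
    have L: "\<And>A B :: complex mat. A \<in> carrier_mat d d \<Longrightarrow> B \<in> carrier_mat d d \<Longrightarrow>
        Re (mtrace (?\<Phi> A)) + Re (mtrace (?\<Phi> B)) = Re (mtrace (?\<Phi> (A + B)))"
    proof -
      fix A B :: "complex mat" assume A: "A \<in> carrier_mat d d" and B: "B \<in> carrier_mat d d"
      have "mtrace (?\<Phi> A + ?\<Phi> B) = mtrace (?\<Phi> A) + mtrace (?\<Phi> B)"
        by (rule mtrace_add[OF apply_seq_props(1)[OF cp A] apply_seq_props(1)[OF cp B]])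
      then show "Re (mtrace (?\<Phi> A)) + Re (mtrace (?\<Phi> B)) = Re (mtrace (?\<Phi> (A + B)))"
        using apply_seq_props(3)[OF cp A B] by simp
    qed
    show "P2 \<alpha> xs ys2 + E xs ys2 = P2 \<beta> xs ys2 + F xs ys2"
      unfolding P2_def E_def F_def using L[OF ca cpm] L[OF cb cpp] meq
      by (simp add: distrib_left[symmetric])
  qed
  define \<Gamma> where "\<Gamma> = 2 * (1 + ln 2) * T + 2 * eta T + T * (ln (card Xs) + ln (card Y2))"
  have pA: "\<bar>MI Xs Y2 (\<lambda>a b. P2 \<alpha> a b + E a b) - MI Xs Y2 (P2 \<alpha>)\<bar> \<le> \<Gamma>"
    unfolding \<Gamma>_def using MI_perturb[OF fX neX fY2 neY2 _ En _ mE T1] sA by blast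
  have pB: "\<bar>MI Xs Y2 (\<lambda>a b. P2 \<beta> a b + F a b) - MI Xs Y2 (P2 \<beta>)\<bar> \<le> \<Gamma>"
    unfolding \<Gamma>_def using MI_perturb[OF fX neX fY2 neY2 _ Fn _ mF T1] sB by blast
  have cXs: "ln (card Xs) = n * ln cX" unfolding Xs_def cX_def card_len using cX0 unfolding cX_def
    by (simp add: ln_realpow)
  have cY2: "ln (card Y2) = (n - k) * ln cY" unfolding Y2_def cY_def card_len using cY0 unfolding cY_def
    by (simp add: ln_realpow)
  have lX: "ln cX \<ge> 0" and lY: "ln cY \<ge> 0" using cX0 cY0 by simp_all
  have "(n - k) * ln cY \<le> n * ln cY" using lY by (intro mult_right_mono, auto)
  hence "ln (card Xs) + ln (card Y2) \<le> n * (ln cX + ln cY)" using cXs cY2 by (simp add: algebra_simps)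
  moreover have "ln (card Xs) + ln (card Y2) \<ge> 0" using cXs cY2 lX lY by simp
  ultimately have "T * (ln (card Xs) + ln (card Y2)) \<le> \<epsilon> * (n * (ln cX + ln cY))"
    using T0 Teps lX lY by (intro mult_mono, auto)
  moreover have "2 * (1 + ln 2) * T \<le> 2 * (1 + ln 2)" using T1 T0 by (simp add: mult_left_le)
  moreover have "eta T \<le> 1" by (rule eta_le_one)
  ultimately have G: "\<Gamma> \<le> 2 * (1 + ln 2) + 2 + \<epsilon> * n * (ln cX + ln cY)" unfolding \<Gamma>_def by (simp add: algebra_simps)
  have MIab: "\<bar>MI Xs Ys (joint_pmf Q N \<alpha>) - MI Xs Ys (joint_pmf Q N \<beta>)\<bar> \<le>
      2 * real k * ln cY + 4 * (1 + ln 2) + 4 + 2 * \<epsilon> * real n * (ln cX + ln cY)"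
  proof -
    have a1: "\<bar>MI Xs Ys (joint_pmf Q N \<alpha>) - MI Xs Y2 (P2 \<alpha>)\<bar> \<le> real k * ln cY" using sA by blast
    have b1: "\<bar>MI Xs Ys (joint_pmf Q N \<beta>) - MI Xs Y2 (P2 \<beta>)\<bar> \<le> real k * ln cY" using sB by blast
    have pA': "\<bar>MI Xs Y2 (\<lambda>a b. P2 \<beta> a b + F a b) - MI Xs Y2 (P2 \<alpha>)\<bar> \<le> \<Gamma>" using pA unfolding eqn .
    define Z where "Z = \<epsilon> * real n * (ln cX + ln cY)"
    define K where "K = real k * ln cY"
    have G': "\<Gamma> \<le> 2 * (1 + ln 2) + 2 + Z" using G unfolding Z_def .
    have e: "2 * real k * ln cY + 4 * (1 + ln 2) + 4 + 2 * \<epsilon> * real n * (ln cX + ln cY) = 2 * K + 4 * (1 + ln 2) + 4 + 2 * Z"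
      unfolding Z_def K_def by (simp add: algebra_simps)
    show ?thesis unfolding e using a1 b1 pA' pB G' unfolding abs_le_iff K_def[symmetric] by linarith
  qed
  have mi: "mutual_info_n Q N \<rho> n = MI Xs Ys (joint_pmf Q N \<rho>) / ln 2"
    if Pn: "\<forall>xs\<in>Xs. \<forall>ys\<in>Ys. joint_pmf Q N \<rho> xs ys \<ge> 0" for \<rho>
    unfolding mutual_info_n_def Let_def Xs_def[symmetric] Ys_def[symmetric]
    by (rule MI_formula[OF fX fY Pn])
  have "\<bar>mutual_info_n Q N \<alpha> n - mutual_info_n Q N \<beta> n\<bar>
      = \<bar>MI Xs Ys (joint_pmf Q N \<alpha>) - MI Xs Ys (joint_pmf Q N \<beta>)\<bar> / ln 2"
    using mi sA sB by (simp add: diff_divide_distrib[symmetric])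
  also have "\<dots> \<le> (2 * real k * ln cY + 4 * (1 + ln 2) + 4 + 2 * \<epsilon> * real n * (ln cX + ln cY)) / ln 2"
    using MIab by (intro divide_right_mono, auto)
  finally show ?thesis unfolding cX_def cY_def .

qed


theorem theorem1:
  fixes d :: nat
    and N :: "'x::finite \<Rightarrow> 'y::finite \<Rightarrow> complex mat \<Rightarrow> complex mat"
    and Q :: "'x \<Rightarrow> real"
    and \<alpha> \<beta> :: "complex mat"
  assumes "cc_qsc d N"
    and "indecomposable d N"
    and "\<forall>x. 0 \<le> Q x" and "(\<Sum>x\<in>UNIV. Q x) = 1"
    and "density d \<alpha>" and "density d \<beta>"
  shows "(\<lambda>n. I_n Q N \<alpha> n - I_n Q N \<beta> n) \<longlonglongrightarrow> 0"
proof (rule LIMSEQ_I)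
  note cq = assms(1) and ind = assms(2) and Qn = assms(3) and Q1 = assms(4) and da = assms(5) and db = assms(6)
  fix r :: real assume r: "0 < r"
  define cX where "cX = card (UNIV :: 'x set)"
  define cY where "cY = card (UNIV :: 'y set)"
  have cX0: "cX > 0" and cY0: "cY > 0" unfolding cX_def cY_def by (simp_all add: finite_UNIV_card_ge_0)
  define L where "L = ln cX + ln cY"
  have L0: "L \<ge> 0" unfolding L_def using cX0 cY0 by simp
  have ln2: "ln (2::real) > 0" by simp
  define \<epsilon> where "\<epsilon> = min 1 (r * ln 2 / (4 * (L + 1)))"
  have e0: "\<epsilon> > 0" unfolding \<epsilon>_def using r L0 ln2 by simp
  have e1: "\<epsilon> \<le> 1" unfolding \<epsilon>_def by simp
  have e2: "\<epsilon> \<le> r * ln 2 / (4 * (L + 1))" unfolding \<epsilon>_def by simp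
  obtain k where k0: "k > 0" and tdk0: "\<forall>n\<ge>k. \<forall>xs :: 'x list. length xs = n \<longrightarrow>
      trace_dist_norm (out_state d N xs \<alpha> - out_state d N xs \<beta>) < \<epsilon>"
    using ind da db e0 unfolding indecomposable_def by blast
  have tdk: "\<forall>xs1 :: 'x list. length xs1 = k \<longrightarrow> trace_dist_norm (out_state d N xs1 \<alpha> - out_state d N xs1 \<beta>) < \<epsilon>"
    using tdk0 by blast
  define C where "C = 2 * real k * ln cY + 4 * (1 + ln 2) + 4"
  have C0: "C \<ge> 0" unfolding C_def using cY0 ln2 by simp
  obtain m :: nat where m: "2 * C / (r * ln 2) < real m" using reals_Archimedean2 by blast
  show "\<exists>no. \<forall>n\<ge>no. norm (I_n Q N \<alpha> n - I_n Q N \<beta> n - 0) < r"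
  proof (intro exI allI impI)
    fix n assume n: "max (max m k) 1 \<le> n"
    hence nk: "k \<le> n" and nm: "m \<le> n" and n1: "n \<ge> 1" by auto
    have npos: "real n > 0" using n1 by simp
    have mb: "\<bar>mutual_info_n Q N \<alpha> n - mutual_info_n Q N \<beta> n\<bar> \<le> (C + 2 * \<epsilon> * real n * L) / ln 2"
      using main_bound[OF cq Qn Q1 da db nk e0 e1 tdk] unfolding C_def L_def cX_def cY_def
      by (simp add: algebra_simps)
    have "norm (I_n Q N \<alpha> n - I_n Q N \<beta> n - 0) = \<bar>mutual_info_n Q N \<alpha> n - mutual_info_n Q N \<beta> n\<bar> / real n"
      unfolding I_n_def using npos by (simp add: diff_divide_distrib[symmetric])
    also have "\<dots> \<le> ((C + 2 * \<epsilon> * real n * L) / ln 2) / real n"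
      using mb npos by (intro divide_right_mono, auto)
    also have "\<dots> = C / (ln 2 * real n) + 2 * \<epsilon> * L / ln 2"
      using npos ln2 by (simp add: field_simps)
    also have "\<dots> < r / 2 + r / 2"
    proof (rule add_less_le_mono)
      have "2 * C / (r * ln 2) < real n" using m nm by linarith
      hence "2 * C < real n * (r * ln 2)" using r ln2 by (simp add: divide_less_eq mult_pos_pos)
      hence "C < r / 2 * (ln 2 * real n)" by (simp add: algebra_simps)
      then show "C / (ln 2 * real n) < r / 2" using ln2 npos by (simp add: divide_less_eq)
      have "2 * \<epsilon> * L \<le> 2 * (r * ln 2 / (4 * (L + 1))) * L"
        using e2 L0 by (intro mult_right_mono, auto)
      also have "\<dots> = (r * ln 2 / 2) * (L / (L + 1))" using L0 by (simp add: field_simps)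
      also have "\<dots> \<le> (r * ln 2 / 2) * 1"
        using L0 r ln2 by (intro mult_left_mono, auto)
      finally have "2 * \<epsilon> * L \<le> r / 2 * ln 2" by simp
      then show "2 * \<epsilon> * L / ln 2 \<le> r / 2" using ln2 by (simp add: divide_le_eq)
    qed
    also have "\<dots> = r" by simp
    finally show "norm (I_n Q N \<alpha> n - I_n Q N \<beta> n - 0) < r" .
  qed
qed

end
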